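(* Let $M^n$ be a smooth orientable $n$-manifold with boundary and $F:M^n\rightarrow\mathbb{R}^{n+1}$ a smooth minimal immersed hypersurface with free boundary on the unit sphere $\mathbb{S}^n$, i.e. $F(\partial M^n)=F(M^n)\cap\mathbb{S}^n$ and $\langle\nu^M,\nu^{\mathbb{S}^n}\rangle=0$ on $F(\partial M^n)$, with $\nu^M$ a unit normal of $F$ and $\nu^{\mathbb{S}^n}$ the outer unit normal of $\mathbb{S}^n$. At a boundary point, choose an orthonormal basis $\tau_1,\dots,\tau_n$ of the tangent space of $M$ with $\tau_1,\dots,\tau_{n-1}$ tangent to $\partial M$ (hence to $\mathbb{S}^n$), diagonalising the second fundamental form $h_{ij}=A(\tau_i,\tau_j)$ of $M$, and $\tau_n=\nu^{\mathbb{S}^n}$. Then at every boundary point \[\nabla_n|A|^2 = -2|A|^2-2n\,h_{nn}^2,\] where $\nabla_n$ denotes the derivative in the direction $\tau_n$.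
   Context: $A$ is the second fundamental form of $M=F(M^n)$ with components $h_{ij}$, and $|A|^2=\sum_{i,j}h_{ij}^2$. *)

theory Defs
  imports "HOL-Analysis.Analysis"
begin

text \<open>Local (chart) model of an immersed hypersurface F of an n-manifold with boundary
  into R^(n+1).  The domain is an open set U of R^n (index type 'n), the manifold
  with boundary corresponds to the half space part {x. x $ k \<le> 0}, its boundary to
  {x. x $ k = 0}.\<close>

fun pd :: "(real^'n \<Rightarrow> real^'m) \<Rightarrow> (real^'n) list \<Rightarrow> real^'n \<Rightarrow> real^'m" where
  "pd f [] = f"
| "pd f (v # vs) = (\<lambda>x. frechet_derivative (pd f vs) (at x) v)"

definition smooth_on :: "(real^'n) set \<Rightarrow> (real^'n \<Rightarrow> real^'m) \<Rightarrow> bool" where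
  "smooth_on U f \<longleftrightarrow> (\<forall>vs. \<forall>x\<in>U. pd f vs differentiable (at x))"

definition dF :: "(real^'n \<Rightarrow> real^'m) \<Rightarrow> real^'n \<Rightarrow> 'n \<Rightarrow> real^'m" where
  "dF F x i = frechet_derivative F (at x) (axis i 1)"

definition metric :: "(real^'n \<Rightarrow> real^'m) \<Rightarrow> real^'n \<Rightarrow> real^'n^'n" where
  "metric F x = (\<chi> i j. dF F x i \<bullet> dF F x j)"

definition sff :: "(real^'n \<Rightarrow> real^'m) \<Rightarrow> (real^'n \<Rightarrow> real^'m) \<Rightarrow> real^'n \<Rightarrow> real^'n \<Rightarrow> real^'n \<Rightarrow> real" where
  "sff F N x u w = pd F [u, w] x \<bullet> N x"

definition sff_mat :: "(real^'n \<Rightarrow> real^'m) \<Rightarrow> (real^'n \<Rightarrow> real^'m) \<Rightarrow> real^'n \<Rightarrow> real^'n^'n" where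
  "sff_mat F N x = (\<chi> i j. sff F N x (axis i 1) (axis j 1))"

definition normA2 :: "(real^'n \<Rightarrow> real^'m) \<Rightarrow> (real^'n \<Rightarrow> real^'m) \<Rightarrow> real^'n \<Rightarrow> real" where
  "normA2 F N x = (let gi = matrix_inv (metric F x); h = sff_mat F N x in
     (\<Sum>i\<in>UNIV. \<Sum>j\<in>UNIV. \<Sum>k\<in>UNIV. \<Sum>l\<in>UNIV. gi$i$k * gi$j$l * h$i$j * h$k$l))"

definition mean_curv :: "(real^'n \<Rightarrow> real^'m) \<Rightarrow> (real^'n \<Rightarrow> real^'m) \<Rightarrow> real^'n \<Rightarrow> real" where
  "mean_curv F N x = (let gi = matrix_inv (metric F x); h = sff_mat F N x in
     (\<Sum>i\<in>UNIV. \<Sum>j\<in>UNIV. gi$i$j * h$i$j))"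

end

theory Submission
  imports Defs
begin

lemma pd_snoc: "pd f (vs @ [z]) = pd (pd f [z]) vs"
  by (induction vs) auto

lemma smooth_pd: "smooth_on U f \<Longrightarrow> smooth_on U (pd f [z])"
  unfolding smooth_on_def by (metis pd_snoc)

lemma smooth_deriv:
  assumes "smooth_on U f" "x \<in> U"
  shows "(pd f vs has_derivative (\<lambda>u. pd f (u#vs) x)) (at x)"
proof -
  have "pd f vs differentiable (at x)" using assms smooth_on_def by blast
  then show ?thesis by (simp add: frechet_derivative_works)
qed

lemma smooth_linear:
  assumes "smooth_on U f" "x \<in> U"
  shows "linear (\<lambda>u. pd f (u#vs) x)"
  using smooth_deriv[OF assms] has_derivative_linear by blast

lemma line_deriv:
  assumes "(\<phi> has_derivative \<phi>') (at (a + t *\<^sub>R b))"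
  shows "((\<lambda>t. \<phi> (a + t *\<^sub>R b)) has_derivative (\<lambda>h. h *\<^sub>R \<phi>' b)) (at t within S)"
proof -
  have l: "linear \<phi>'" using assms has_derivative_linear by blast
  have "((\<lambda>t. a + t *\<^sub>R b) has_derivative (\<lambda>h. h *\<^sub>R b)) (at t within S)"
    by (auto intro!: derivative_eq_intros)
  from has_derivative_compose[OF this assms] show ?thesis
    using l by (simp add: linear.scaleR)
qed

lemma schwarz_aux:
  fixes \<phi> :: "'a::real_normed_vector \<Rightarrow> real"
  assumes ball: "\<And>a b. a \<in> {0..s} \<Longrightarrow> b \<in> {0..s} \<Longrightarrow> x + a *\<^sub>R u + b *\<^sub>R w \<in> U"
  and s: "0 < s"
  and D1: "\<And>y. y \<in> U \<Longrightarrow> (\<phi> has_derivative (\<lambda>h. Da h y)) (at y)"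
  and D2: "\<And>y. y \<in> U \<Longrightarrow> ((Da u) has_derivative (\<lambda>h. Db h y)) (at y)"
  shows "\<exists>a\<in>{0..s}. \<exists>b\<in>{0..s}. \<phi> (x + s*\<^sub>R u + s*\<^sub>R w) - \<phi> (x + s*\<^sub>R u) - \<phi> (x + s*\<^sub>R w) + \<phi> x
            = s^2 * Db w (x + a*\<^sub>R u + b*\<^sub>R w)"
proof -
  define \<psi> where "\<psi> t = \<phi> ((x + s *\<^sub>R w) + t *\<^sub>R u) - \<phi> (x + t *\<^sub>R u)" for t
  have "(\<psi> has_derivative (\<lambda>h. h * (Da u (x + t *\<^sub>R u + s *\<^sub>R w) - Da u (x + t *\<^sub>R u)))) (at t within {0..s})"
    if t: "0 \<le> t" "t \<le> s" for t
  proof -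
    have u1: "(x + s *\<^sub>R w) + t *\<^sub>R u \<in> U" using ball[of t s] t s by (simp add: algebra_simps)
    have u2: "x + t *\<^sub>R u \<in> U" using ball[of t 0] t s by simp
    have 1: "((\<lambda>t. \<phi> ((x + s *\<^sub>R w) + t *\<^sub>R u)) has_derivative (\<lambda>h. h *\<^sub>R Da u ((x + s *\<^sub>R w) + t *\<^sub>R u))) (at t within {0..s})"
      by (rule line_deriv) (rule D1[OF u1])
    have 2: "((\<lambda>t. \<phi> (x + t *\<^sub>R u)) has_derivative (\<lambda>h. h *\<^sub>R Da u (x + t *\<^sub>R u))) (at t within {0..s})"
      by (rule line_deriv) (rule D1[OF u2])
    have "(\<psi> has_derivative (\<lambda>h. h *\<^sub>R Da u ((x + s *\<^sub>R w) + t *\<^sub>R u) - h *\<^sub>R Da u (x + t *\<^sub>R u))) (at t within {0..s})"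
      unfolding \<psi>_def by (rule has_derivative_diff[OF 1 2])
    then show ?thesis by (simp add: algebra_simps)
  qed
  from mvt_very_simple[of 0 s \<psi>, OF _ this] s obtain a where a: "a \<in> {0..s}"
    and ea: "\<psi> s - \<psi> 0 = (s - 0) * (Da u (x + a *\<^sub>R u + s *\<^sub>R w) - Da u (x + a *\<^sub>R u))"
    by auto
  define ch where "ch r = Da u ((x + a *\<^sub>R u) + r *\<^sub>R w)" for r
  have "(ch has_derivative (\<lambda>h. h * Db w (x + a *\<^sub>R u + r *\<^sub>R w))) (at r within {0..s})"
    if r: "0 \<le> r" "r \<le> s" for r
  proof -
    have u1: "(x + a *\<^sub>R u) + r *\<^sub>R w \<in> U" using ball[of a r] a r by (simp add: algebra_simps)
    show ?thesis unfolding ch_def using line_deriv[OF D2[OF u1]] by simp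
  qed
  from mvt_very_simple[of 0 s ch, OF _ this] s obtain b where b: "b \<in> {0..s}"
    and eb: "ch s - ch 0 = (s - 0) * Db w (x + a *\<^sub>R u + b *\<^sub>R w)"
    by auto
  have "\<phi> (x + s*\<^sub>R u + s*\<^sub>R w) - \<phi> (x + s*\<^sub>R u) - \<phi> (x + s*\<^sub>R w) + \<phi> x = \<psi> s - \<psi> 0"
    unfolding \<psi>_def by (simp add: algebra_simps)
  also have "\<dots> = s * (ch s - ch 0)" using ea unfolding ch_def by (simp add: algebra_simps)
  also have "\<dots> = s^2 * Db w (x + a*\<^sub>R u + b*\<^sub>R w)" using eb by (simp add: power2_eq_square)
  finally show ?thesis using a b by blast
qed

lemma schwarz:
  fixes \<phi> :: "'a::real_normed_vector \<Rightarrow> real"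
  assumes U: "open U" "x \<in> U"
  and D1: "\<And>y. y \<in> U \<Longrightarrow> (\<phi> has_derivative (\<lambda>h. Da h y)) (at y)"
  and D2: "\<And>u y. y \<in> U \<Longrightarrow> ((Da u) has_derivative (\<lambda>h. Db h u y)) (at y)"
  and C: "\<And>u w. continuous (at x) (Db w u)"
  shows "Db w u x = Db u w x"
proof (rule ccontr)
  assume ne: "Db w u x \<noteq> Db u w x"
  define e where "e = \<bar>Db w u x - Db u w x\<bar> / 2"
  have e: "e > 0" using ne by (simp add: e_def)
  obtain r where r: "r > 0" "ball x r \<subseteq> U" using U open_contains_ball by blast
  have c1: "\<forall>\<epsilon>>0. \<exists>\<delta>>0. \<forall>y. dist y x < \<delta> \<longrightarrow> dist (Db w u y) (Db w u x) < \<epsilon>"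
    using C[where u=u and w=w] unfolding continuous_at_eps_delta .
  obtain Da' where Da': "Da' > 0" "\<And>y. dist y x < Da' \<Longrightarrow> dist (Db w u y) (Db w u x) < e"
    using c1[rule_format, OF e] by auto
  have c2: "\<forall>\<epsilon>>0. \<exists>\<delta>>0. \<forall>y. dist y x < \<delta> \<longrightarrow> dist (Db u w y) (Db u w x) < \<epsilon>"
    using C[where u=w and w=u] unfolding continuous_at_eps_delta .
  obtain Db' where Db': "Db' > 0" "\<And>y. dist y x < Db' \<Longrightarrow> dist (Db u w y) (Db u w x) < e"
    using c2[rule_format, OF e] by auto
  define K where "K = norm u + norm w + 1"
  have K: "K > 0" unfolding K_def by (simp add: add_nonneg_pos)
  define m where "m = min r (min Da' Db')"
  have m: "m > 0" "m \<le> r" "m \<le> Da'" "m \<le> Db'" using r Da' Db' by (simp_all add: m_def)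
  define s where "s = m / (2 * K)"
  have s: "s > 0" using m K by (simp add: s_def)
  have sK: "s * K = m / 2" using K by (simp add: s_def)
  have near: "dist (x + a *\<^sub>R u + b *\<^sub>R w) x < m" if "a \<in> {0..s}" "b \<in> {0..s}" for a b
  proof -
    have a: "0 \<le> a" "a \<le> s" and b: "0 \<le> b" "b \<le> s" using that by auto
    have "dist (x + a *\<^sub>R u + b *\<^sub>R w) x = norm (a *\<^sub>R u + b *\<^sub>R w)" by (simp add: dist_norm)
    also have "\<dots> \<le> norm (a *\<^sub>R u) + norm (b *\<^sub>R w)" by (rule norm_triangle_ineq)
    also have "\<dots> = a * norm u + b * norm w" using a b by simp
    also have "\<dots> \<le> s * norm u + s * norm w"
      using a b by (intro add_mono mult_right_mono) auto
    also have "\<dots> < s * K" using s unfolding K_def by (simp add: distrib_left)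
    also have "\<dots> = m / 2" by (rule sK)
    finally show ?thesis using m by simp
  qed
  have ball1: "x + a *\<^sub>R u + b *\<^sub>R w \<in> U" if "a \<in> {0..s}" "b \<in> {0..s}" for a b
  proof -
    have "dist x (x + a *\<^sub>R u + b *\<^sub>R w) < r" using near[OF that] m(2) by (simp add: dist_commute)
    then show ?thesis using r(2) by (meson mem_ball subsetD)
  qed
  have ball2: "x + a *\<^sub>R w + b *\<^sub>R u \<in> U" if "a \<in> {0..s}" "b \<in> {0..s}" for a b
  proof -
    have eq: "x + a *\<^sub>R w + b *\<^sub>R u = x + b *\<^sub>R u + a *\<^sub>R w" by (simp add: add_ac)
    show ?thesis unfolding eq by (rule ball1[OF that(2,1)])
  qed
  have "\<exists>a\<in>{0..s}. \<exists>b\<in>{0..s}. \<phi> (x + s*\<^sub>R u + s*\<^sub>R w) - \<phi> (x + s*\<^sub>R u) - \<phi> (x + s*\<^sub>R w) + \<phi> x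
            = s^2 * Db w u (x + a*\<^sub>R u + b*\<^sub>R w)"
    by (rule schwarz_aux[of s x u w U \<phi> Da "\<lambda>h. Db h u", OF ball1 s D1 D2])
  then obtain a b where ab: "a \<in> {0..s}" "b \<in> {0..s}" and e1: "\<phi> (x + s*\<^sub>R u + s*\<^sub>R w) - \<phi> (x + s*\<^sub>R u) - \<phi> (x + s*\<^sub>R w) + \<phi> x
            = s^2 * Db w u (x + a*\<^sub>R u + b*\<^sub>R w)"
    by blast
  have "\<exists>a\<in>{0..s}. \<exists>b\<in>{0..s}. \<phi> (x + s*\<^sub>R w + s*\<^sub>R u) - \<phi> (x + s*\<^sub>R w) - \<phi> (x + s*\<^sub>R u) + \<phi> x
            = s^2 * Db u w (x + a*\<^sub>R w + b*\<^sub>R u)"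
    by (rule schwarz_aux[of s x w u U \<phi> Da "\<lambda>h. Db h w", OF ball2 s D1 D2])
  then obtain a' b' where ab': "a' \<in> {0..s}" "b' \<in> {0..s}" and e2: "\<phi> (x + s*\<^sub>R w + s*\<^sub>R u) - \<phi> (x + s*\<^sub>R w) - \<phi> (x + s*\<^sub>R u) + \<phi> x
            = s^2 * Db u w (x + a'*\<^sub>R w + b'*\<^sub>R u)"
    by blast
  have sw: "x + s*\<^sub>R w + s*\<^sub>R u = x + s*\<^sub>R u + s*\<^sub>R w" by (simp add: add_ac)
  have "s^2 * Db w u (x + a*\<^sub>R u + b*\<^sub>R w) = s^2 * Db u w (x + a'*\<^sub>R w + b'*\<^sub>R u)"
    using e1 e2 unfolding sw by linarith
  then have eq: "Db w u (x + a*\<^sub>R u + b*\<^sub>R w) = Db u w (x + a'*\<^sub>R w + b'*\<^sub>R u)" using s by simp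
  have n1: "dist (Db w u (x + a*\<^sub>R u + b*\<^sub>R w)) (Db w u x) < e"
    using Da'(2) near[OF ab] m(3) by simp
  have "dist (x + b' *\<^sub>R u + a' *\<^sub>R w) x < m" using near[OF ab'(2,1)] .
  moreover have "x + b' *\<^sub>R u + a' *\<^sub>R w = x + a'*\<^sub>R w + b'*\<^sub>R u" by (simp add: add_ac)
  ultimately have "dist (x + a'*\<^sub>R w + b'*\<^sub>R u) x < m" by simp
  then have n2: "dist (Db u w (x + a'*\<^sub>R w + b'*\<^sub>R u)) (Db u w x) < e"
    using Db'(2) m(4) by simp
  have "\<bar>Db w u x - Db u w x\<bar> < 2 * e" using n1 n2 eq unfolding dist_real_def by linarith
  then show False unfolding e_def by simp
qed

lemma dir_zero:
  fixes \<phi> :: "'a::real_normed_vector \<Rightarrow> 'b::real_normed_vector"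
  assumes D: "(\<phi> has_derivative \<phi>') (at x)"
  and eps: "\<epsilon> > 0" and Z: "\<And>s. 0 < s \<Longrightarrow> s < \<epsilon> \<Longrightarrow> \<phi> (x + s *\<^sub>R d) = \<phi> x"
  shows "\<phi>' d = 0"
proof -
  have "((\<lambda>t. \<phi> (x + t *\<^sub>R d)) has_derivative (\<lambda>h. h *\<^sub>R \<phi>' d)) (at 0 within {0..\<epsilon>/2})"
    using line_deriv[of \<phi> \<phi>' x 0 d] D by simp
  then have 1: "((\<lambda>t. \<phi> (x + t *\<^sub>R d)) has_vector_derivative \<phi>' d) (at 0 within {0..\<epsilon>/2})"
    by (simp add: has_vector_derivative_def)
  have 2: "((\<lambda>t. \<phi> (x + t *\<^sub>R d)) has_vector_derivative 0) (at 0 within {0..\<epsilon>/2})"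
  proof (rule has_vector_derivative_transform_within[where f="\<lambda>t. \<phi> x" and d=\<epsilon>])
    show "((\<lambda>t. \<phi> x) has_vector_derivative 0) (at 0 within {0..\<epsilon>/2})" by simp
    show "0 < \<epsilon>" by fact
    show "0 \<in> {0..\<epsilon>/2}" using eps by simp
    show "\<phi> x = \<phi> (x + t *\<^sub>R d)" if "t \<in> {0..\<epsilon>/2}" "dist t 0 < \<epsilon>" for t
    proof (cases "t = 0")
      case False then show ?thesis using that Z[of t] by auto
    qed simp
  qed
  have nb: "at 0 within {0..\<epsilon>/2} \<noteq> (bot :: real filter)"
    using eps by (simp add: trivial_limit_within)
  show ?thesis using vector_derivative_unique_within[OF nb 1 2] .
qed



lemma inner_deriv:
  assumes "(f has_derivative f') (at x)" "(g has_derivative g') (at x)"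
  shows "((\<lambda>y. f y \<bullet> g y) has_derivative (\<lambda>h. f x \<bullet> g' h + f' h \<bullet> g x)) (at x)"
  using has_derivative_inner[OF assms] .

lemma deriv_zero_open:
  assumes D: "(\<phi> has_derivative \<phi>') (at x)" and U: "open U" "x \<in> U" and Z: "\<And>y. y \<in> U \<Longrightarrow> \<phi> y = c"
  shows "\<phi>' h = 0"
proof -
  have "((\<lambda>y. c) has_derivative (\<lambda>_. 0)) (at x)" by simp
  then have "(\<phi> has_derivative (\<lambda>_. 0)) (at x)"
    by (rule has_derivative_transform_within_open[OF _ U]) (simp add: Z)
  from has_derivative_unique[OF D this] show ?thesis by simp
qed

lemma deriv_zero_dir:
  assumes D: "(\<phi> has_derivative \<phi>') (at x)" and U: "open U" "x \<in> U"
  and Z: "\<And>y. y \<in> U \<Longrightarrow> Q y \<Longrightarrow> \<phi> y = \<phi> x"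
  and Qd: "\<And>s. s > 0 \<Longrightarrow> Q (x + s *\<^sub>R d)"
  shows "\<phi>' d = 0"
proof -
  obtain r where r: "r > 0" "ball x r \<subseteq> U" using U open_contains_ball by blast
  define \<epsilon> where "\<epsilon> = r / (norm d + 1)"
  have nd: "norm d + 1 > 0" by (simp add: add_nonneg_pos)
  have \<epsilon>: "\<epsilon> > 0" using r nd by (simp add: \<epsilon>_def)
  show ?thesis
  proof (rule dir_zero[OF D \<epsilon>])
    fix s assume s: "0 < s" "s < \<epsilon>"
    have "norm (s *\<^sub>R d) = s * norm d" using s by simp
    also have "\<dots> \<le> s * (norm d + 1)" using s by simp
    also have "\<dots> < \<epsilon> * (norm d + 1)" using s nd by (intro mult_strict_right_mono) auto
    also have "\<dots> = r" using nd by (simp add: \<epsilon>_def)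
    finally have "x + s *\<^sub>R d \<in> U" using r by (auto simp: dist_norm subset_iff)
    then show "\<phi> (x + s *\<^sub>R d) = \<phi> x" using Z Qd s by blast
  qed
qed

lemma sym2:
  fixes f :: "real^'n \<Rightarrow> real^'m"
  assumes S: "smooth_on U f" and U: "open U" "x \<in> U"
  shows "pd f [u,w] x = pd f [w,u] x"
proof -
  have "pd f [u,w] x $ i = pd f [w,u] x $ i" for i
  proof (rule schwarz[where \<phi>="\<lambda>y. f y $ i" and Da="\<lambda>h y. pd f [h] y $ i" and Db="\<lambda>h u y. pd f [h,u] y $ i" and U=U, OF U])
    fix y assume y: "y \<in> U"
    show "((\<lambda>y. f y $ i) has_derivative (\<lambda>h. pd f [h] y $ i)) (at y)"
      using bounded_linear.has_derivative[OF bounded_linear_vec_nth smooth_deriv[OF S y, of "[]"]] by simp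
  next
    fix u y assume y: "y \<in> U"
    show "((\<lambda>y. pd f [u] y $ i) has_derivative (\<lambda>h. pd f [h,u] y $ i)) (at y)"
      using bounded_linear.has_derivative[OF bounded_linear_vec_nth smooth_deriv[OF S y, of "[u]"]] by simp
  next
    fix u w
    have "pd f [w,u] differentiable (at x)" using S U smooth_on_def by blast
    then have "isCont (pd f [w,u]) x" by (rule differentiable_imp_continuous_within)
    then show "continuous (at x) (\<lambda>y. pd f [w,u] y $ i)" by simp
  qed
  then show ?thesis by (simp add: vec_eq_iff)
qed

locale FB =
  fixes F N :: "real^'n \<Rightarrow> real^'m" and U :: "(real^'n) set" and k :: 'n and p v
  assumes dim: "CARD('m) = CARD('n) + 1"
    and U: "open U"
    and F_smooth: "smooth_on U F"
    and immersion: "\<forall>x\<in>U. inj (frechet_derivative F (at x))"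
    and N_smooth: "smooth_on U N"
    and N_unit: "\<forall>x\<in>U. norm (N x) = 1"
    and N_normal: "\<forall>x\<in>U. \<forall>i. N x \<bullet> dF F x i = 0"
    and minimal: "\<forall>x\<in>U. x $ k \<le> 0 \<longrightarrow> mean_curv F N x = 0"
    and bdry_sphere: "\<forall>x\<in>U. x $ k = 0 \<longrightarrow> norm (F x) = 1"
    and free_bdry: "\<forall>x\<in>U. x $ k = 0 \<longrightarrow> N x \<bullet> F x = 0"
    and p: "p \<in> U" "p $ k = 0"
    and v: "frechet_derivative F (at p) v = F p"
begin

lemma DF: "x \<in> U \<Longrightarrow> (pd F vs has_derivative (\<lambda>u. pd F (u#vs) x)) (at x)"
  using smooth_deriv[OF F_smooth] .
lemma DN: "x \<in> U \<Longrightarrow> (pd N vs has_derivative (\<lambda>u. pd N (u#vs) x)) (at x)"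
  using smooth_deriv[OF N_smooth] .
lemma DF0: "x \<in> U \<Longrightarrow> (F has_derivative (\<lambda>u. pd F [u] x)) (at x)"
  using DF[of x "[]"] by simp
lemma DN0: "x \<in> U \<Longrightarrow> (N has_derivative (\<lambda>u. pd N [u] x)) (at x)"
  using DN[of x "[]"] by simp
lemma linF: "x \<in> U \<Longrightarrow> linear (\<lambda>u. pd F (u#vs) x)"
  using smooth_linear[OF F_smooth] .
lemma linN: "x \<in> U \<Longrightarrow> linear (\<lambda>u. pd N (u#vs) x)"
  using smooth_linear[OF N_smooth] .
lemma symF: "x \<in> U \<Longrightarrow> pd F [u,w] x = pd F [w,u] x"
  using sym2[OF F_smooth U] .

lemma sym3a: assumes x: "x \<in> U" shows "pd F [a,b,c] x = pd F [a,c,b] x"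
proof -
  have 1: "(pd F [b,c] has_derivative (\<lambda>u. pd F [u,b,c] x)) (at x)" using DF[OF x] .
  have 2: "(pd F [c,b] has_derivative (\<lambda>u. pd F [u,c,b] x)) (at x)" using DF[OF x] .
  have "(pd F [b,c] has_derivative (\<lambda>u. pd F [u,c,b] x)) (at x)"
    by (rule has_derivative_transform_within_open[OF 2 U x]) (rule symF)
  from has_derivative_unique[OF 1 this] have "(\<lambda>u. pd F [u,b,c] x) = (\<lambda>u. pd F [u,c,b] x)" .
  from fun_cong[OF this, of a] show ?thesis by simp
qed

lemma sym3b: assumes x: "x \<in> U" shows "pd F [a,b,c] x = pd F [b,a,c] x"
proof -
  have e: "pd F [a,b,c] = pd (pd F [c]) [a,b]" "pd F [b,a,c] = pd (pd F [c]) [b,a]"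
    using pd_snoc[of F "[a,b]" c] pd_snoc[of F "[b,a]" c] by simp_all
  show ?thesis unfolding e using sym2[OF smooth_pd[OF F_smooth] U x] .
qed

lemma N_perp: assumes x: "x \<in> U" shows "N x \<bullet> pd F [c] x = 0"
proof -
  have l: "linear (frechet_derivative F (at x))" using linF[OF x, of "[]"] by simp
  have e: "(\<Sum>i\<in>UNIV. c$i *\<^sub>R axis i 1) = c" using basis_expansion[of c] by (simp add: scalar_mult_eq_scaleR)
  have "pd F [c] x = (\<lambda>u. pd F [u] x) (\<Sum>i\<in>UNIV. c$i *\<^sub>R axis i 1)" by (simp add: e)
  also have "\<dots> = (\<Sum>i\<in>UNIV. c$i *\<^sub>R pd F [axis i 1] x)"
    by (simp add: linear_sum[OF l] linear_scale[OF l])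
  finally have "N x \<bullet> pd F [c] x = (\<Sum>i\<in>UNIV. c$i * (N x \<bullet> pd F [axis i 1] x))"
    by (simp add: inner_sum_right)
  also have "\<dots> = 0" using N_normal x by (simp add: dF_def)
  finally show ?thesis .
qed

lemma N_Nd: assumes x: "x \<in> U" shows "N x \<bullet> pd N [u] x = 0"
proof -
  have "N x \<bullet> pd N [u] x + pd N [u] x \<bullet> N x = 0"
    by (rule deriv_zero_open[OF inner_deriv[OF DN0[OF x] DN0[OF x]] U x, where c=1])
      (use N_unit in \<open>simp add: power2_norm_eq_inner[symmetric]\<close>)
  then show ?thesis by (simp add: inner_commute)
qed

lemma F3: assumes x: "x \<in> U" shows "pd N [t] x \<bullet> pd F [c] x + N x \<bullet> pd F [t,c] x = 0"
proof -
  have "N x \<bullet> pd F [t,c] x + pd N [t] x \<bullet> pd F [c] x = 0"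
    by (rule deriv_zero_open[OF inner_deriv[OF DN0[OF x] DF[OF x, of "[c]"]] U x, where c=0])
      (rule N_perp)
  then show ?thesis by simp
qed

lemma F4: assumes x: "x \<in> U"
  shows "pd N [t',t] x \<bullet> pd F [c] x + pd N [t] x \<bullet> pd F [t',c] x + pd N [t'] x \<bullet> pd F [t,c] x
         + N x \<bullet> pd F [t',t,c] x = 0"
proof -
  have "(pd N [t] x \<bullet> pd F [t',c] x + pd N [t',t] x \<bullet> pd F [c] x)
        + (N x \<bullet> pd F [t',t,c] x + pd N [t'] x \<bullet> pd F [t,c] x) = 0"
    by (rule deriv_zero_open[OF has_derivative_add[OF inner_deriv[OF DN[OF x, of "[t]"] DF[OF x, of "[c]"]]
             inner_deriv[OF DN0[OF x] DF[OF x, of "[t,c]"]]] U x, where c=0])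
      (rule F3)
  then show ?thesis by simp
qed

lemma B1: assumes x: "x \<in> U" "x $ k = 0" and t: "t $ k = 0" shows "F x \<bullet> pd F [t] x = 0"
proof -
  have "F x \<bullet> pd F [t] x + pd F [t] x \<bullet> F x = 0"
    by (rule deriv_zero_dir[OF inner_deriv[OF DF0[OF x(1)] DF0[OF x(1)]] U x(1), where Q="\<lambda>y. y $ k = 0"])
      (use bdry_sphere x t in \<open>simp_all add: power2_norm_eq_inner[symmetric]\<close>)
  then show ?thesis by (simp add: inner_commute)
qed

lemma B2: assumes t: "t $ k = 0" "t' $ k = 0"
  shows "pd F [t'] p \<bullet> pd F [t] p + F p \<bullet> pd F [t',t] p = 0"
proof -
  have "F p \<bullet> pd F [t',t] p + pd F [t'] p \<bullet> pd F [t] p = 0"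
    by (rule deriv_zero_dir[OF inner_deriv[OF DF0[OF p(1)] DF[OF p(1), of "[t]"]] U p(1), where Q="\<lambda>y. y $ k = 0"])
      (use B1 p t in \<open>simp_all\<close>)
  then show ?thesis by simp
qed

lemma B3: assumes x: "x \<in> U" "x $ k = 0" and t: "t $ k = 0" shows "pd N [t] x \<bullet> F x = 0"
proof -
  have "N x \<bullet> pd F [t] x + pd N [t] x \<bullet> F x = 0"
    by (rule deriv_zero_dir[OF inner_deriv[OF DN0[OF x(1)] DF0[OF x(1)]] U x(1), where Q="\<lambda>y. y $ k = 0"])
      (use free_bdry x t in \<open>simp_all\<close>)
  then show ?thesis using N_perp[OF x(1)] by simp
qed

lemma B4: assumes t: "t $ k = 0" "t' $ k = 0"
  shows "pd N [t',t] p \<bullet> F p + pd N [t] p \<bullet> pd F [t'] p = 0"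
proof -
  have "pd N [t] p \<bullet> pd F [t'] p + pd N [t',t] p \<bullet> F p = 0"
    by (rule deriv_zero_dir[OF inner_deriv[OF DN[OF p(1), of "[t]"] DF0[OF p(1)]] U p(1), where Q="\<lambda>y. y $ k = 0"])
      (use B3 p t in \<open>simp_all\<close>)
  then show ?thesis by simp
qed

end

lemma lin_inner_left: assumes "linear f" shows "linear (\<lambda>x. f x \<bullet> c)"
  by (rule linearI) (simp_all add: linear_add[OF assms] linear_scale[OF assms] inner_add_left)

lemma lin_inner_right: assumes "linear f" shows "linear (\<lambda>x. c \<bullet> f x)"
  by (rule linearI) (simp_all add: linear_add[OF assms] linear_scale[OF assms] inner_add_right)

lemma basis_exp: "(\<Sum>i\<in>UNIV. (z::real^'n)$i *\<^sub>R axis i 1) = z"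
  using basis_expansion[of z] by (simp add: scalar_mult_eq_scaleR)

lemma lin_expand:
  fixes f :: "real^'n \<Rightarrow> 'b::real_vector"
  assumes l: "linear f" shows "f x = (\<Sum>i\<in>UNIV. x$i *\<^sub>R f (axis i 1))"
proof -
  have "f x = f (\<Sum>i\<in>UNIV. x$i *\<^sub>R axis i 1)" by (simp add: basis_exp)
  also have "\<dots> = (\<Sum>i\<in>UNIV. x$i *\<^sub>R f (axis i 1))"
    by (simp add: linear_sum[OF l] linear_scale[OF l])
  finally show ?thesis .
qed

lemma bil_expand:
  fixes g :: "real^'n \<Rightarrow> real^'n \<Rightarrow> real"
  assumes l1: "\<And>y. linear (\<lambda>x. g x y)" and l2: "\<And>x. linear (g x)"
  shows "(\<Sum>i\<in>UNIV. \<Sum>j\<in>UNIV. x$i * y$j * g (axis i 1) (axis j 1)) = g x y"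
proof -
  have "g x y = (\<Sum>i\<in>UNIV. x$i * g (axis i 1) y)"
    using lin_expand[OF l1[of y], of x] by simp
  also have "\<dots> = (\<Sum>i\<in>UNIV. x$i * (\<Sum>j\<in>UNIV. y$j * g (axis i 1) (axis j 1)))"
  proof (rule sum.cong[OF refl])
    fix i show "x$i * g (axis i 1) y = x$i * (\<Sum>j\<in>UNIV. y$j * g (axis i 1) (axis j 1))"
      using lin_expand[OF l2[of "axis i 1"], of y] by simp
  qed
  also have "\<dots> = (\<Sum>i\<in>UNIV. \<Sum>j\<in>UNIV. x$i * y$j * g (axis i 1) (axis j 1))"
    by (simp add: sum_distrib_left mult.assoc)
  finally show ?thesis by simp
qed

lemma inv_unique:
  fixes A P :: "real^'n^'n"
  assumes "A ** P = mat 1" shows "matrix_inv A = P"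
proof -
  have PA: "P ** A = mat 1" using assms matrix_left_right_inverse by blast
  have "\<exists>Q. A ** Q = mat 1 \<and> Q ** A = mat 1" using assms PA by blast
  from someI_ex[OF this] have Q: "A ** matrix_inv A = mat 1" "matrix_inv A ** A = mat 1"
    unfolding matrix_inv_def by auto
  have "matrix_inv A = matrix_inv A ** (A ** P)" by (simp add: assms)
  also have "\<dots> = (matrix_inv A ** A) ** P" by (simp add: matrix_mul_assoc)
  also have "\<dots> = P" by (simp add: Q)
  finally show ?thesis .
qed

lemma invertible_inv:
  fixes A :: "real^'n^'n"
  assumes "invertible A" shows "A ** matrix_inv A = mat 1" "matrix_inv A ** A = mat 1"
proof -
  have "\<exists>Q. A ** Q = mat 1 \<and> Q ** A = mat 1" using assms unfolding invertible_def by blast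
  from someI_ex[OF this] show "A ** matrix_inv A = mat 1" "matrix_inv A ** A = mat 1"
    unfolding matrix_inv_def by auto
qed

lemma ortho_expand:
  fixes C :: "'a::euclidean_space set"
  assumes orth: "pairwise orthogonal C" and n1: "\<And>c. c \<in> C \<Longrightarrow> norm c = 1"
    and sp: "y \<in> span C"
  shows "y = (\<Sum>c\<in>C. (c \<bullet> y) *\<^sub>R c)"
proof -
  have cc: "c \<bullet> c = 1" if "c \<in> C" for c using n1[OF that] by (simp add: power2_norm_eq_inner[symmetric])
  define z where "z = y - (\<Sum>b\<in>C. (b \<bullet> y / (b \<bullet> b)) *\<^sub>R b)"
  have s1: "(\<Sum>b\<in>C. (b \<bullet> y / (b \<bullet> b)) *\<^sub>R b) \<in> span C"
    by (intro span_sum span_scale span_base)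
  have zs: "z \<in> span C" unfolding z_def by (rule span_diff[OF sp s1])
  have "orthogonal z z" using Gram_Schmidt_step[OF orth zs, of y] unfolding z_def .
  then have z0: "z = 0" by (simp add: orthogonal_def)
  have "(\<Sum>b\<in>C. (b \<bullet> y / (b \<bullet> b)) *\<^sub>R b) = (\<Sum>b\<in>C. (b \<bullet> y) *\<^sub>R b)"
    by (rule sum.cong) (simp_all add: cc)
  then show ?thesis using z0 unfolding z_def by simp
qed

context FB
begin

abbreviation L where "L \<equiv> frechet_derivative F (at p)"

lemma L_lin: "linear L" using linF[OF p(1), of "[]"] by simp
lemma L_inj: "inj L" using immersion p by blast
lemma L_v: "L v = F p" using v .

lemma subspace_Hk: "subspace {t::real^'n. t $ k = 0}"
  by (simp add: subspace_def)

lemma dim_Hk: "dim {t::real^'n. t $ k = 0} = CARD('n) - 1"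
proof -
  have "{t::real^'n. t $ k = 0} = {t. axis k 1 \<bullet> t = 0}" by (simp add: inner_axis')
  moreover have "dim {t::real^'n. axis k (1::real) \<bullet> t = 0} = DIM(real^'n) - 1"
    by (rule dim_hyperplane) simp
  ultimately show ?thesis by simp
qed

definition Wd where "Wd = L ` {t. t $ k = 0}"

lemma subspace_Wd: "subspace Wd"
  unfolding Wd_def by (rule linear_subspace_image[OF L_lin subspace_Hk])

lemma dim_Wd: "dim Wd = CARD('n) - 1"
proof -
  have "aff_dim Wd = aff_dim {t::real^'n. t $ k = 0}"
    unfolding Wd_def by (rule aff_dim_injective_linear_image[OF L_lin L_inj])
  then have "int (dim Wd) = int (dim {t::real^'n. t $ k = 0})"
    using aff_dim_subspace[OF subspace_Wd] aff_dim_subspace[OF subspace_Hk] by simp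
  then show ?thesis using dim_Hk by simp
qed

definition Bs where "Bs = (SOME B. B \<subseteq> Wd \<and> pairwise orthogonal B \<and> (\<forall>x\<in>B. norm x = 1)
   \<and> independent B \<and> card B = dim Wd \<and> span B = Wd)"

lemma Bs_all: "Bs \<subseteq> Wd \<and> pairwise orthogonal Bs \<and> (\<forall>x\<in>Bs. norm x = 1)
   \<and> independent Bs \<and> card Bs = dim Wd \<and> span Bs = Wd"
proof -
  obtain B where "B \<subseteq> Wd" "pairwise orthogonal B" "\<And>x. x \<in> B \<Longrightarrow> norm x = 1"
              "independent B" "card B = dim Wd" "span B = Wd"
    using orthonormal_basis_subspace[OF subspace_Wd] by metis
  then have "\<exists>B. B \<subseteq> Wd \<and> pairwise orthogonal B \<and> (\<forall>x\<in>B. norm x = 1)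
   \<and> independent B \<and> card B = dim Wd \<and> span B = Wd" by blast
  then show ?thesis unfolding Bs_def by (rule someI_ex)
qed

lemma Bs_sub: "Bs \<subseteq> Wd" and Bs_orth: "pairwise orthogonal Bs" and Bs_norm: "x \<in> Bs \<Longrightarrow> norm x = 1"
  and Bs_card: "card Bs = CARD('n) - 1" and Bs_span: "span Bs = Wd"
  using Bs_all dim_Wd by auto

lemma Bs_fin: "finite Bs" using Bs_orth pairwise_orthogonal_imp_finite by blast

lemma Fp_norm: "norm (F p) = 1" using bdry_sphere p by blast
lemma Np_norm: "norm (N p) = 1" using N_unit p by blast
lemma Fp_Fp: "F p \<bullet> F p = 1" using Fp_norm by (simp add: power2_norm_eq_inner[symmetric])
lemma Np_Np: "N p \<bullet> N p = 1" using Np_norm by (simp add: power2_norm_eq_inner[symmetric])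
lemma Np_L: "N p \<bullet> L u = 0" using N_perp[OF p(1), of u] by simp
lemma Np_Fp: "N p \<bullet> F p = 0" using free_bdry p by blast

lemma Wd_perp: "w \<in> Wd \<Longrightarrow> F p \<bullet> w = 0"
  unfolding Wd_def using B1[OF p] by auto

lemma Bs_Fp: "b \<in> Bs \<Longrightarrow> F p \<bullet> b = 0" using Wd_perp Bs_sub by blast
lemma Bs_Np: "b \<in> Bs \<Longrightarrow> N p \<bullet> b = 0" using Bs_sub Np_L unfolding Wd_def by blast
lemma Fp_notin: "F p \<notin> Bs" using Bs_Fp Fp_Fp by fastforce

definition Sx where "Sx = insert (F p) Bs"
definition Cx where "Cx = insert (N p) Sx"

lemma Np_notin: "N p \<notin> Sx" unfolding Sx_def using Bs_Np Np_Np Np_Fp by fastforce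
lemma Sx_fin: "finite Sx" unfolding Sx_def using Bs_fin by simp
lemma Cx_fin: "finite Cx" unfolding Cx_def using Sx_fin by simp

lemma Sx_card: "card Sx = CARD('n)"
proof -
  have "CARD('n) > 0" by simp
  then show ?thesis unfolding Sx_def using Bs_fin Fp_notin Bs_card by simp
qed

lemma Cx_card: "card Cx = CARD('m)"
  unfolding Cx_def using Sx_fin Np_notin Sx_card dim by simp

lemma Bs_inner: "a \<in> Bs \<Longrightarrow> b \<in> Bs \<Longrightarrow> a \<bullet> b = (if a = b then 1 else 0)"
  using Bs_orth Bs_norm unfolding pairwise_def orthogonal_def
  by (auto simp: power2_norm_eq_inner[symmetric])

lemma Sx_inner: "a \<in> Sx \<Longrightarrow> b \<in> Sx \<Longrightarrow> a \<bullet> b = (if a = b then 1 else 0)"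
  unfolding Sx_def using Bs_inner Bs_Fp Fp_Fp Fp_notin by (auto simp: inner_commute)

lemma Cx_inner: "a \<in> Cx \<Longrightarrow> b \<in> Cx \<Longrightarrow> a \<bullet> b = (if a = b then 1 else 0)"
  unfolding Cx_def using Sx_inner Np_Np Np_notin Bs_Np Np_Fp unfolding Sx_def
  by (auto simp: inner_commute)

lemma Cx_orth: "pairwise orthogonal Cx"
  using Cx_inner unfolding pairwise_def orthogonal_def by auto

lemma Cx_norm: "c \<in> Cx \<Longrightarrow> norm c = 1"
  using Cx_inner[of c c] by (simp add: norm_eq_sqrt_inner)

lemma expand_m: "y = (\<Sum>c\<in>Cx. (c \<bullet> y) *\<^sub>R c)"
proof (rule ortho_expand[OF Cx_orth Cx_norm])
  have ind: "independent Cx"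
    by (rule pairwise_orthogonal_independent[OF Cx_orth]) (use Cx_norm in force)
  have "card Cx = dim (UNIV :: (real^'m) set)" using Cx_card by simp
  then have "UNIV \<subseteq> span Cx" using card_eq_dim[of Cx UNIV] ind Cx_fin by simp
  then show "y \<in> span Cx" by blast
qed

definition E where "E b = inv L b"

lemma Sx_range: "b \<in> Sx \<Longrightarrow> b \<in> range L"
  unfolding Sx_def using Bs_sub L_v unfolding Wd_def by (auto intro: range_eqI[of _ _ v])

lemma LE: "b \<in> Sx \<Longrightarrow> L (E b) = b"
  unfolding E_def using Sx_range by (simp add: f_inv_into_f)

lemma E_Fp: "E (F p) = v" unfolding E_def by (rule inv_f_eq[OF L_inj L_v])

lemma E_Bs: "b \<in> Bs \<Longrightarrow> E b $ k = 0"
proof -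
  assume b: "b \<in> Bs"
  then obtain t where t: "t $ k = 0" "b = L t" using Bs_sub unfolding Wd_def by auto
  then have "E b = t" unfolding E_def using inv_f_eq[OF L_inj] by simp
  then show ?thesis using t by simp
qed

lemma Fp_in: "F p \<in> Sx" unfolding Sx_def by simp
lemma Bs_Sx: "b \<in> Bs \<Longrightarrow> b \<in> Sx" unfolding Sx_def by simp

lemma expand_L: "L u = (\<Sum>b\<in>Sx. (b \<bullet> L u) *\<^sub>R b)"
proof -
  have "L u = (\<Sum>c\<in>Cx. (c \<bullet> L u) *\<^sub>R c)" by (rule expand_m)
  also have "\<dots> = (\<Sum>b\<in>Sx. (b \<bullet> L u) *\<^sub>R b)"
    unfolding Cx_def using Sx_fin Np_notin Np_L by simp
  finally show ?thesis .
qed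

lemma expand_dom: "u = (\<Sum>b\<in>Sx. (b \<bullet> L u) *\<^sub>R E b)"
proof -
  have "L (\<Sum>b\<in>Sx. (b \<bullet> L u) *\<^sub>R E b) = (\<Sum>b\<in>Sx. (b \<bullet> L u) *\<^sub>R L (E b))"
    by (simp add: linear_sum[OF L_lin] linear_scale[OF L_lin])
  also have "\<dots> = (\<Sum>b\<in>Sx. (b \<bullet> L u) *\<^sub>R b)" by (simp add: LE)
  also have "\<dots> = L u" by (rule expand_L[symmetric])
  finally show ?thesis using L_inj by (simp add: inj_eq)
qed

lemma LE_inner: "a \<in> Sx \<Longrightarrow> b \<in> Sx \<Longrightarrow> L (E a) \<bullet> L (E b) = (if a = b then 1 else 0)"
  by (simp add: LE Sx_inner)

definition Pm :: "real^'n^'n" where "Pm = (\<chi> i j. \<Sum>b\<in>Sx. E b $ i * E b $ j)"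

lemma metric_p: "metric F p $ i $ j = L (axis i 1) \<bullet> L (axis j 1)"
  by (simp add: metric_def dF_def)

lemma metric_Pm: "metric F p ** Pm = mat 1"
proof -
  have "(metric F p ** Pm) $ i $ j = mat 1 $ i $ j" for i j
  proof -
    have "(metric F p ** Pm) $ i $ j = (\<Sum>l\<in>UNIV. (L (axis i 1) \<bullet> L (axis l 1)) * (\<Sum>b\<in>Sx. E b $ l * E b $ j))"
      by (simp add: matrix_matrix_mult_def metric_p Pm_def)
    also have "\<dots> = (\<Sum>b\<in>Sx. (\<Sum>l\<in>UNIV. E b $ l * (L (axis i 1) \<bullet> L (axis l 1))) * E b $ j)"
      by (simp add: sum_distrib_left sum_distrib_right sum.swap[of _ UNIV Sx] mult_ac)
    also have "\<dots> = (\<Sum>b\<in>Sx. (L (axis i 1) \<bullet> L (E b)) * E b $ j)"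
    proof (rule sum.cong[OF refl])
      fix b
      have "L (E b) = (\<Sum>l\<in>UNIV. E b $ l *\<^sub>R L (axis l 1))" by (rule lin_expand[OF L_lin])
      then show "(\<Sum>l\<in>UNIV. E b $ l * (L (axis i 1) \<bullet> L (axis l 1))) * E b $ j = (L (axis i 1) \<bullet> L (E b)) * E b $ j"
        by (simp add: inner_sum_right)
    qed
    also have "\<dots> = (\<Sum>b\<in>Sx. (b \<bullet> L (axis i 1)) *\<^sub>R E b) $ j"
      by (simp add: LE inner_commute)
    also have "\<dots> = axis i 1 $ j" using expand_dom[of "axis i 1"] by simp
    also have "\<dots> = mat 1 $ i $ j" by (simp add: axis_def mat_def)
    finally show ?thesis .
  qed
  then show ?thesis by (simp add: vec_eq_iff)
qed

lemma gi_p: "matrix_inv (metric F p) = Pm"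
  by (rule inv_unique[OF metric_Pm])

end

lemma sum_swap22:
  "(\<Sum>i\<in>I. \<Sum>k\<in>K. \<Sum>a\<in>A. \<Sum>b\<in>B. f i k a b) = (\<Sum>a\<in>A. \<Sum>b\<in>B. \<Sum>i\<in>I. \<Sum>k\<in>K. f i k a b)"
proof -
  have "(\<Sum>i\<in>I. \<Sum>k\<in>K. \<Sum>a\<in>A. \<Sum>b\<in>B. f i k a b) = (\<Sum>i\<in>I. \<Sum>a\<in>A. \<Sum>k\<in>K. \<Sum>b\<in>B. f i k a b)"
    by (rule sum.cong[OF refl], rule sum.swap)
  also have "\<dots> = (\<Sum>i\<in>I. \<Sum>a\<in>A. \<Sum>b\<in>B. \<Sum>k\<in>K. f i k a b)"
    by (intro sum.cong[OF refl] sum.swap)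
  also have "\<dots> = (\<Sum>a\<in>A. \<Sum>i\<in>I. \<Sum>b\<in>B. \<Sum>k\<in>K. f i k a b)"
    by (rule sum.swap)
  also have "\<dots> = (\<Sum>a\<in>A. \<Sum>b\<in>B. \<Sum>i\<in>I. \<Sum>k\<in>K. f i k a b)"
    by (intro sum.cong[OF refl] sum.swap)
  finally show ?thesis .
qed

definition cf :: "('b \<Rightarrow> real^'n) \<Rightarrow> ('n \<Rightarrow> 'n \<Rightarrow> real) \<Rightarrow> 'b \<Rightarrow> 'b \<Rightarrow> real" where
  "cf E R a b = (\<Sum>i\<in>UNIV. \<Sum>k\<in>UNIV. E a $ i * E b $ k * R i k)"

lemma contract:
  "(\<Sum>i\<in>UNIV. \<Sum>k\<in>UNIV. (\<Sum>a\<in>S. \<Sum>b\<in>S. \<alpha> a b * E a $ i * E b $ k) * R i k)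
   = (\<Sum>a\<in>S. \<Sum>b\<in>S. \<alpha> a b * cf E R a b)"
proof -
  have "(\<Sum>i\<in>UNIV. \<Sum>k\<in>UNIV. (\<Sum>a\<in>S. \<Sum>b\<in>S. \<alpha> a b * E a $ i * E b $ k) * R i k)
     = (\<Sum>i\<in>UNIV. \<Sum>k\<in>UNIV. \<Sum>a\<in>S. \<Sum>b\<in>S. \<alpha> a b * (E a $ i * E b $ k * R i k))"
    by (simp add: sum_distrib_right mult.assoc)
  also have "\<dots> = (\<Sum>a\<in>S. \<Sum>b\<in>S. \<Sum>i\<in>UNIV. \<Sum>k\<in>UNIV. \<alpha> a b * (E a $ i * E b $ k * R i k))"
    by (rule sum_swap22)
  also have "\<dots> = (\<Sum>a\<in>S. \<Sum>b\<in>S. \<alpha> a b * cf E R a b)"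
    by (simp add: cf_def sum_distrib_left)
  finally show ?thesis .
qed

lemma cf_prod:
  "cf E (\<lambda>j l. (\<Sum>i\<in>UNIV. E a $ i * C i j) * (\<Sum>k\<in>UNIV. E b $ k * D k l)) c d = cf E C a c * cf E D b d"
proof -
  define X where "X j = (\<Sum>i\<in>UNIV. E a $ i * C i j)" for j
  define Y where "Y l = (\<Sum>k\<in>UNIV. E b $ k * D k l)" for l
  have "cf E (\<lambda>j l. X j * Y l) c d = (\<Sum>j\<in>UNIV. \<Sum>l\<in>UNIV. (E c $ j * X j) * (E d $ l * Y l))"
    unfolding cf_def by (intro sum.cong refl) (simp only: mult_ac)
  also have "\<dots> = (\<Sum>j\<in>UNIV. E c $ j * X j) * (\<Sum>l\<in>UNIV. E d $ l * Y l)"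
    by (rule sum_product[symmetric])
  also have "(\<Sum>j\<in>UNIV. E c $ j * X j) = cf E C a c"
  proof -
    have "(\<Sum>j\<in>UNIV. E c $ j * X j) = (\<Sum>j\<in>UNIV. \<Sum>i\<in>UNIV. E a $ i * E c $ j * C i j)"
      unfolding X_def by (intro sum.cong refl) (simp add: sum_distrib_left mult_ac)
    also have "\<dots> = cf E C a c" unfolding cf_def by (rule sum.swap)
    finally show ?thesis .
  qed
  also have "(\<Sum>l\<in>UNIV. E d $ l * Y l) = cf E D b d"
  proof -
    have "(\<Sum>l\<in>UNIV. E d $ l * Y l) = (\<Sum>l\<in>UNIV. \<Sum>k\<in>UNIV. E b $ k * E d $ l * D k l)"
      unfolding Y_def by (intro sum.cong refl) (simp add: sum_distrib_left mult_ac)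
    also have "\<dots> = cf E D b d" unfolding cf_def by (rule sum.swap)
    finally show ?thesis .
  qed
  finally show ?thesis unfolding X_def Y_def .
qed

lemma Q_lemma:
  assumes A: "\<And>i k. A i k = (\<Sum>a\<in>S. \<Sum>b\<in>S. \<alpha> a b * E a $ i * E b $ k)"
    and B: "\<And>j l. B j l = (\<Sum>c\<in>S. \<Sum>d\<in>S. \<beta> c d * E c $ j * E d $ l)"
  shows "(\<Sum>i\<in>UNIV. \<Sum>j\<in>UNIV. \<Sum>k\<in>UNIV. \<Sum>l\<in>UNIV. A i k * B j l * C i j * D k l)
        = (\<Sum>a\<in>S. \<Sum>b\<in>S. \<alpha> a b * (\<Sum>c\<in>S. \<Sum>d\<in>S. \<beta> c d * (cf E C a c * cf E D b d)))"
proof -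
  define R1 where "R1 i k = (\<Sum>j\<in>UNIV. \<Sum>l\<in>UNIV. B j l * C i j * D k l)" for i k
  have "(\<Sum>i\<in>UNIV. \<Sum>j\<in>UNIV. \<Sum>k\<in>UNIV. \<Sum>l\<in>UNIV. A i k * B j l * C i j * D k l)
      = (\<Sum>i\<in>UNIV. \<Sum>k\<in>UNIV. \<Sum>j\<in>UNIV. \<Sum>l\<in>UNIV. A i k * (B j l * C i j * D k l))"
  proof (rule sum.cong[OF refl])
    fix i
    show "(\<Sum>j\<in>UNIV. \<Sum>k\<in>UNIV. \<Sum>l\<in>UNIV. A i k * B j l * C i j * D k l)
        = (\<Sum>k\<in>UNIV. \<Sum>j\<in>UNIV. \<Sum>l\<in>UNIV. A i k * (B j l * C i j * D k l))"
      by (subst sum.swap) (simp add: mult.assoc)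
  qed
  also have "\<dots> = (\<Sum>i\<in>UNIV. \<Sum>k\<in>UNIV. A i k * R1 i k)"
    unfolding R1_def by (simp add: sum_distrib_left)
  also have "\<dots> = (\<Sum>a\<in>S. \<Sum>b\<in>S. \<alpha> a b * cf E R1 a b)"
    unfolding A by (rule contract)
  also have "\<dots> = (\<Sum>a\<in>S. \<Sum>b\<in>S. \<alpha> a b * (\<Sum>c\<in>S. \<Sum>d\<in>S. \<beta> c d * (cf E C a c * cf E D b d)))"
  proof (intro sum.cong refl arg_cong[where f="\<lambda>x. _ * x"])
    fix a b
    define R2 where "R2 j l = (\<Sum>i\<in>UNIV. E a $ i * C i j) * (\<Sum>k\<in>UNIV. E b $ k * D k l)" for j l
    have "cf E R1 a b = (\<Sum>i\<in>UNIV. \<Sum>k\<in>UNIV. \<Sum>j\<in>UNIV. \<Sum>l\<in>UNIV. B j l * (E a $ i * E b $ k * C i j * D k l))"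
      unfolding cf_def R1_def by (simp add: sum_distrib_left mult_ac)
    also have "\<dots> = (\<Sum>j\<in>UNIV. \<Sum>l\<in>UNIV. \<Sum>i\<in>UNIV. \<Sum>k\<in>UNIV. B j l * (E a $ i * E b $ k * C i j * D k l))"
      by (rule sum_swap22)
    also have "\<dots> = (\<Sum>j\<in>UNIV. \<Sum>l\<in>UNIV. B j l * R2 j l)"
    proof (intro sum.cong refl)
      fix j l
      show "(\<Sum>i\<in>UNIV. \<Sum>k\<in>UNIV. B j l * (E a $ i * E b $ k * C i j * D k l)) = B j l * R2 j l"
        unfolding R2_def sum_product by (simp add: sum_distrib_left mult_ac)
    qed
    also have "\<dots> = (\<Sum>c\<in>S. \<Sum>d\<in>S. \<beta> c d * cf E R2 c d)"
      unfolding B by (rule contract)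
    also have "\<dots> = (\<Sum>c\<in>S. \<Sum>d\<in>S. \<beta> c d * (cf E C a c * cf E D b d))"
      unfolding R2_def cf_prod ..
    finally show "cf E R1 a b = (\<Sum>c\<in>S. \<Sum>d\<in>S. \<beta> c d * (cf E C a c * cf E D b d))" .
  qed
  finally show ?thesis .
qed

lemma prod_diff:
  assumes "\<And>i. i \<in> I \<Longrightarrow> f i differentiable (at x)"
  shows "(\<lambda>y. \<Prod>i\<in>I. (f i y :: real)) differentiable (at x)"
  using assms
proof (induction I rule: infinite_finite_induct)
  case (insert a I)
  then show ?case by (simp add: differentiable_mult)
qed simp_all

lemma det_diff:
  fixes M :: "real^'n \<Rightarrow> real^'k^'k"
  assumes "\<And>r c. (\<lambda>y. M y $ r $ c) differentiable (at x)"
  shows "(\<lambda>y. det (M y)) differentiable (at x)"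
  unfolding det_def
  by (intro differentiable_sum ballI differentiable_mult differentiable_const prod_diff assms)
     (simp add: finite_permutations)

lemma diff_transform:
  assumes "f differentiable (at x)" "open U" "x \<in> U" "\<And>y. y \<in> U \<Longrightarrow> f y = g y"
  shows "g differentiable (at x)"
  using assms has_derivative_transform_within_open unfolding differentiable_def by metis

lemma sum_delta_r: "(\<Sum>l\<in>UNIV. (f l::real) * (if l = (j::'n::finite) then 1 else 0)) = f j"
proof -
  have "(\<Sum>l\<in>UNIV. f l * (if l = j then 1 else 0)) = (\<Sum>l\<in>UNIV. if l = j then f l else 0)"
    by (rule sum.cong) auto
  then show ?thesis by simp
qed

lemma inv_cramer:
  fixes A :: "real^'n^'n"
  assumes inv: "invertible A"
  shows "matrix_inv A $ i $ j = det (\<chi> r c. if c = i then axis j 1 $ r else A $ r $ c) / det A"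
proof -
  have d: "det A \<noteq> 0" using inv invertible_det_nz by blast
  have "A *v (matrix_inv A *v axis j 1) = axis j 1"
    using invertible_inv(1)[OF inv] by (simp add: matrix_vector_mul_assoc)
  then have "matrix_inv A *v axis j 1 = (\<chi> k. det (\<chi> r c. if c = k then axis j 1 $ r else A $ r $ c) / det A)"
    using cramer[OF d] by blast
  then have "(matrix_inv A *v axis j 1) $ i = det (\<chi> r c. if c = i then axis j 1 $ r else A $ r $ c) / det A"
    by simp
  moreover have "(matrix_inv A *v axis j 1) $ i = matrix_inv A $ i $ j"
    by (simp add: matrix_vector_mult_def axis_def sum_delta_r)
  ultimately show ?thesis by simp
qed


context FB
begin

lemma metric_ent: "metric F y $ i $ j = pd F [axis i 1] y \<bullet> pd F [axis j 1] y"
  by (simp add: metric_def dF_def)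

lemma G_deriv: assumes x: "x \<in> U"
  shows "((\<lambda>y. metric F y $ i $ j) has_derivative
     (\<lambda>h. pd F [axis i 1] x \<bullet> pd F [h, axis j 1] x + pd F [h, axis i 1] x \<bullet> pd F [axis j 1] x)) (at x)"
  unfolding metric_ent using inner_deriv[OF DF[OF x, of "[axis i 1]"] DF[OF x, of "[axis j 1]"]] .

lemma G_diff: "x \<in> U \<Longrightarrow> (\<lambda>y. metric F y $ i $ j) differentiable (at x)"
  using G_deriv unfolding differentiable_def by blast

lemma G_vec: assumes x: "x \<in> U" shows "(metric F x *v y) $ i = pd F [axis i 1] x \<bullet> pd F [y] x"
proof -
  have e: "pd F [y] x = (\<Sum>j\<in>UNIV. y$j *\<^sub>R pd F [axis j 1] x)"
    using lin_expand[OF linF[OF x, of "[]"], of y] by simp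
  have "(metric F x *v y) $ i = (\<Sum>j\<in>UNIV. y$j * (pd F [axis i 1] x \<bullet> pd F [axis j 1] x))"
    by (simp add: matrix_vector_mult_def metric_ent mult.commute)
  also have "\<dots> = pd F [axis i 1] x \<bullet> (\<Sum>j\<in>UNIV. y$j *\<^sub>R pd F [axis j 1] x)"
    by (simp add: inner_sum_right)
  also have "\<dots> = pd F [axis i 1] x \<bullet> pd F [y] x" using e by simp
  finally show ?thesis .
qed

lemma G_inv: assumes x: "x \<in> U" shows "invertible (metric F x)"
proof -
  have l: "linear (frechet_derivative F (at x))" using linF[OF x, of "[]"] by simp
  have inj: "inj (frechet_derivative F (at x))" using immersion x by blast
  have "y = 0" if y0: "metric F x *v y = 0" for y
  proof -
    have e: "pd F [y] x = (\<Sum>j\<in>UNIV. y$j *\<^sub>R pd F [axis j 1] x)"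
      using lin_expand[OF linF[OF x, of "[]"], of y] by simp
    have "0 = (\<Sum>i\<in>UNIV. y$i * (metric F x *v y)$i)" using y0 by simp
    also have "\<dots> = (\<Sum>i\<in>UNIV. y$i * (pd F [axis i 1] x \<bullet> pd F [y] x))"
      by (simp only: G_vec[OF x])
    also have "\<dots> = (\<Sum>i\<in>UNIV. y$i *\<^sub>R pd F [axis i 1] x) \<bullet> pd F [y] x"
      by (simp add: inner_sum_left)
    also have "\<dots> = pd F [y] x \<bullet> pd F [y] x" using e by simp
    finally have "pd F [y] x = 0" by simp
    then have "frechet_derivative F (at x) y = frechet_derivative F (at x) 0"
      using linear_0[OF l] by simp
    then show "y = 0" using inj by (simp add: inj_eq)
  qed
  then show ?thesis
    unfolding invertible_left_inverse matrix_left_invertible_ker by blast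
qed

lemma gi_ent: "x \<in> U \<Longrightarrow> matrix_inv (metric F x) $ i $ j
   = det (\<chi> r c. if c = i then axis j 1 $ r else metric F x $ r $ c) / det (metric F x)"
  by (rule inv_cramer[OF G_inv])

lemma gi_diff: "(\<lambda>y. matrix_inv (metric F y) $ i $ j) differentiable (at p)"
proof (rule diff_transform[OF _ U p(1)])
  show "(\<lambda>y. det (\<chi> r c. if c = i then axis j 1 $ r else metric F y $ r $ c) / det (metric F y)) differentiable (at p)"
  proof (rule differentiable_divide)
    show "(\<lambda>y. det (\<chi> r c. if c = i then axis j 1 $ r else metric F y $ r $ c)) differentiable (at p)"
    proof (rule det_diff)
      fix r c
      show "(\<lambda>y. (\<chi> r c. if c = i then axis j 1 $ r else metric F y $ r $ c) $ r $ c) differentiable (at p)"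
        by (cases "c = i") (simp_all add: G_diff[OF p(1)])
    qed
    show "(\<lambda>y. det (metric F y)) differentiable (at p)" by (rule det_diff) (rule G_diff[OF p(1)])
    show "det (metric F p) \<noteq> 0" using G_inv[OF p(1)] invertible_det_nz by blast
  qed
  show "\<And>y. y \<in> U \<Longrightarrow> det (\<chi> r c. if c = i then axis j 1 $ r else metric F y $ r $ c) / det (metric F y)
      = matrix_inv (metric F y) $ i $ j"
    using gi_ent by simp
qed

lemma gi_deriv: "((\<lambda>y. matrix_inv (metric F y) $ i $ j) has_derivative
    frechet_derivative (\<lambda>y. matrix_inv (metric F y) $ i $ j) (at p)) (at p)"
  using gi_diff frechet_derivative_works by blast

definition gid where "gid i j = frechet_derivative (\<lambda>y. matrix_inv (metric F y) $ i $ j) (at p) v"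
definition Gd where "Gd x y = L x \<bullet> pd F [v, y] p + pd F [v, x] p \<bullet> L y"

lemma GG: "(\<Sum>l\<in>UNIV. Gd (axis i 1) (axis l 1) * Pm $ l $ j + metric F p $ i $ l * gid l j) = 0"
proof -
  have D: "((\<lambda>y. \<Sum>l\<in>UNIV. metric F y $ i $ l * matrix_inv (metric F y) $ l $ j) has_derivative
     (\<lambda>h. \<Sum>l\<in>UNIV. metric F p $ i $ l * frechet_derivative (\<lambda>y. matrix_inv (metric F y) $ l $ j) (at p) h
          + (pd F [axis i 1] p \<bullet> pd F [h, axis l 1] p + pd F [h, axis i 1] p \<bullet> pd F [axis l 1] p)
             * matrix_inv (metric F p) $ l $ j)) (at p)"
    by (intro has_derivative_sum has_derivative_mult G_deriv[OF p(1)] gi_deriv)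
  have Z: "(\<Sum>l\<in>UNIV. metric F y $ i $ l * matrix_inv (metric F y) $ l $ j) = mat 1 $ i $ j" if y: "y \<in> U" for y
  proof -
    have "(metric F y ** matrix_inv (metric F y)) $ i $ j = mat 1 $ i $ j"
      by (simp only: invertible_inv(1)[OF G_inv[OF y]])
    then show ?thesis by (simp add: matrix_matrix_mult_def)
  qed
  have "(\<Sum>l\<in>UNIV. metric F p $ i $ l * frechet_derivative (\<lambda>y. matrix_inv (metric F y) $ l $ j) (at p) v
          + (pd F [axis i 1] p \<bullet> pd F [v, axis l 1] p + pd F [v, axis i 1] p \<bullet> pd F [axis l 1] p)
             * matrix_inv (metric F p) $ l $ j) = 0"
    by (rule deriv_zero_open[OF D U p(1), where c="mat 1 $ i $ j"]) (rule Z)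
  then show ?thesis by (simp add: gid_def Gd_def gi_p add.commute)
qed

definition Gdm :: "real^'n^'n" where "Gdm = (\<chi> i l. Gd (axis i 1) (axis l 1))"
definition gidm :: "real^'n^'n" where "gidm = (\<chi> l j. gid l j)"

lemma GG_mat: "Gdm ** Pm + metric F p ** gidm = 0"
  using GG by (simp add: vec_eq_iff matrix_matrix_mult_def Gdm_def gidm_def sum.distrib)

lemma mat_neg: "(A::real^'n^'n) ** (- B) = - (A ** B)"
  by (simp add: vec_eq_iff matrix_matrix_mult_def sum_negf)

lemma gidm_eq: "gidm = - (Pm ** (Gdm ** Pm))"
proof -
  have PG: "Pm ** metric F p = mat 1" using metric_Pm matrix_left_right_inverse by blast
  have H: "metric F p ** gidm = - (Gdm ** Pm)" using GG_mat by (simp add: eq_neg_iff_add_eq_0 add.commute)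
  have "gidm = (Pm ** metric F p) ** gidm" by (simp add: PG)
  also have "\<dots> = Pm ** (metric F p ** gidm)" by (simp add: matrix_mul_assoc)
  also have "\<dots> = - (Pm ** (Gdm ** Pm))" by (simp add: H mat_neg)
  finally show ?thesis .
qed

lemma lin_v2: "linear (\<lambda>x. pd F [v, x] p)"
proof -
  have "(\<lambda>x. pd F [v, x] p) = (\<lambda>x. pd F [x, v] p)" by (rule ext) (rule symF[OF p(1)])
  then show ?thesis using linF[OF p(1), of "[v]"] by simp
qed

lemma lin_2a: "linear (\<lambda>x. pd F [x, y] p)" using linF[OF p(1), of "[y]"] .
lemma lin_2b: "linear (\<lambda>y. pd F [x, y] p)"
proof -
  have "(\<lambda>y. pd F [x, y] p) = (\<lambda>y. pd F [y, x] p)" by (rule ext) (rule symF[OF p(1)])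
  then show ?thesis using linF[OF p(1), of "[x]"] by simp
qed

lemma lin_3a: "linear (\<lambda>x. pd F [v, x, y] p)"
proof -
  have "(\<lambda>x. pd F [v, x, y] p) = (\<lambda>x. pd F [x, v, y] p)" by (rule ext) (rule sym3b[OF p(1)])
  then show ?thesis using linF[OF p(1), of "[v,y]"] by simp
qed

lemma lin_3b: "linear (\<lambda>y. pd F [v, x, y] p)"
proof -
  have "(\<lambda>y. pd F [v, x, y] p) = (\<lambda>y. pd F [y, v, x] p)"
    by (rule ext) (metis sym3a sym3b p(1))
  then show ?thesis using linF[OF p(1), of "[v,x]"] by simp
qed

lemma Gd_lin1: "linear (\<lambda>x. Gd x y)"
  unfolding Gd_def by (intro linear_compose_add lin_inner_left L_lin lin_v2)
lemma Gd_lin2: "linear (\<lambda>y. Gd x y)"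
  unfolding Gd_def by (intro linear_compose_add lin_inner_right L_lin lin_v2)

definition hf where "hf x y = pd F [x, y] p \<bullet> N p"
definition hdf where "hdf x y = pd F [v, x, y] p \<bullet> N p + pd F [x, y] p \<bullet> pd N [v] p"

lemma hf_lin1: "linear (\<lambda>x. hf x y)" unfolding hf_def by (intro lin_inner_left lin_2a)
lemma hf_lin2: "linear (\<lambda>y. hf x y)" unfolding hf_def by (intro lin_inner_left lin_2b)
lemma hdf_lin1: "linear (\<lambda>x. hdf x y)" unfolding hdf_def
  by (intro linear_compose_add lin_inner_left lin_3a lin_2a)
lemma hdf_lin2: "linear (\<lambda>y. hdf x y)" unfolding hdf_def
  by (intro linear_compose_add lin_inner_left lin_3b lin_2b)

lemma cf_bil:
  assumes "\<And>y. linear (\<lambda>x. g x y)" "\<And>x. linear (\<lambda>y. g x y)"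
  shows "cf E (\<lambda>i j. g (axis i 1) (axis j 1)) a b = g (E a) (E b)"
  unfolding cf_def using bil_expand[of g, OF assms] by simp

lemma delta_sum: "a \<in> Sx \<Longrightarrow> (\<Sum>b\<in>Sx. (if a = b then 1 else 0) * X b) = (X a :: real)"
proof -
  assume a: "a \<in> Sx"
  have "(\<Sum>b\<in>Sx. (if a = b then 1 else 0) * X b) = (\<Sum>b\<in>Sx. if a = b then X b else 0)"
    by (rule sum.cong) auto
  also have "\<dots> = X a" using a Sx_fin by simp
  finally show ?thesis .
qed

lemma Pm_form: "Pm $ i $ q = (\<Sum>a\<in>Sx. \<Sum>b\<in>Sx. (if a = b then 1 else 0) * E a $ i * E b $ q)"
proof -
  have "(\<Sum>b\<in>Sx. (if a = b then 1 else 0) * E a $ i * E b $ q) = E a $ i * E a $ q" if "a \<in> Sx" for a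
    using delta_sum[OF that, of "\<lambda>b. E a $ i * E b $ q"] by (simp add: mult.assoc)
  then show ?thesis unfolding Pm_def by (simp cong: sum.cong)
qed

lemma gid_form: "gid i q = (\<Sum>a\<in>Sx. \<Sum>b\<in>Sx. (- Gd (E a) (E b)) * E a $ i * E b $ q)"
proof -
  have "gid i q = gidm $ i $ q" by (simp add: gidm_def)
  also have "\<dots> = - ((Pm ** (Gdm ** Pm)) $ i $ q)" by (simp add: gidm_eq)
  also have "(Pm ** (Gdm ** Pm)) $ i $ q = (\<Sum>r\<in>UNIV. \<Sum>s\<in>UNIV. (Pm $ i $ r * Pm $ s $ q) * Gdm $ r $ s)"
    by (simp add: matrix_matrix_mult_def sum_distrib_left mult_ac)
  also have "\<dots> = (\<Sum>r\<in>UNIV. \<Sum>s\<in>UNIV. (\<Sum>a\<in>Sx. \<Sum>b\<in>Sx. (E a $ i * E b $ q) * E a $ r * E b $ s) * Gdm $ r $ s)"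
  proof (intro sum.cong refl)
    fix r s
    show "(Pm $ i $ r * Pm $ s $ q) * Gdm $ r $ s = (\<Sum>a\<in>Sx. \<Sum>b\<in>Sx. (E a $ i * E b $ q) * E a $ r * E b $ s) * Gdm $ r $ s"
      unfolding Pm_def by (simp add: sum_product mult_ac)
  qed
  also have "\<dots> = (\<Sum>a\<in>Sx. \<Sum>b\<in>Sx. (E a $ i * E b $ q) * cf E (\<lambda>r s. Gdm $ r $ s) a b)"
    by (rule contract)
  also have "\<dots> = (\<Sum>a\<in>Sx. \<Sum>b\<in>Sx. (E a $ i * E b $ q) * Gd (E a) (E b))"
  proof -
    have "cf E (\<lambda>r s. Gdm $ r $ s) a b = Gd (E a) (E b)" for a b
      unfolding Gdm_def using cf_bil[of Gd, OF Gd_lin1 Gd_lin2] by simp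
    then show ?thesis by simp
  qed
  finally show ?thesis by (simp add: sum_negf[symmetric] mult_ac)
qed

end

context FB
begin

lemma sm_ent: "sff_mat F N y $ i $ j = pd F [axis i 1, axis j 1] y \<bullet> N y"
  by (simp add: sff_mat_def sff_def)

lemma sm_deriv: "((\<lambda>y. sff_mat F N y $ i $ j) has_derivative
   (\<lambda>h. pd F [axis i 1, axis j 1] p \<bullet> pd N [h] p + pd F [h, axis i 1, axis j 1] p \<bullet> N p)) (at p)"
  unfolding sm_ent using inner_deriv[OF DF[OF p(1), of "[axis i 1, axis j 1]"] DN0[OF p(1)]] .

definition hm where "hm i j = hf (axis i 1) (axis j 1)"
definition hdm where "hdm i j = hdf (axis i 1) (axis j 1)"

lemma sm_p: "sff_mat F N p $ i $ j = hm i j" by (simp add: sm_ent hm_def hf_def)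
lemma sm_dv: "pd F [axis i 1, axis j 1] p \<bullet> pd N [v] p + pd F [v, axis i 1, axis j 1] p \<bullet> N p = hdm i j"
  by (simp add: hdm_def hdf_def add.commute)

lemma normA2_fun: "normA2 F N = (\<lambda>x. \<Sum>i\<in>UNIV. \<Sum>j\<in>UNIV. \<Sum>k\<in>UNIV. \<Sum>l\<in>UNIV.
   matrix_inv (metric F x) $ i $ k * matrix_inv (metric F x) $ j $ l * sff_mat F N x $ i $ j * sff_mat F N x $ k $ l)"
  by (rule ext) (simp add: normA2_def Let_def)

lemma mc_fun: "mean_curv F N = (\<lambda>x. \<Sum>i\<in>UNIV. \<Sum>j\<in>UNIV. matrix_inv (metric F x) $ i $ j * sff_mat F N x $ i $ j)"
  by (rule ext) (simp add: mean_curv_def Let_def)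

abbreviation gim where "gim x i j \<equiv> matrix_inv (metric F x) $ i $ j"
abbreviation gdh where "gdh i j h \<equiv> frechet_derivative (\<lambda>y. matrix_inv (metric F y) $ i $ j) (at p) h"
abbreviation smd where "smd i j h \<equiv> pd F [axis i 1, axis j 1] p \<bullet> pd N [h] p + pd F [h, axis i 1, axis j 1] p \<bullet> N p"

lemma normA2_D: "(normA2 F N has_derivative (\<lambda>h. \<Sum>i\<in>UNIV. \<Sum>j\<in>UNIV. \<Sum>k\<in>UNIV. \<Sum>l\<in>UNIV.
     gim p i k * gim p j l * sff_mat F N p $ i $ j * smd k l h
   + (gim p i k * gim p j l * smd i j h + (gim p i k * gdh j l h + gdh i k h * gim p j l) * sff_mat F N p $ i $ j)
     * sff_mat F N p $ k $ l)) (at p)"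
  unfolding normA2_fun
  by (intro has_derivative_sum has_derivative_mult gi_deriv sm_deriv)

lemma normA2_dv: "frechet_derivative (normA2 F N) (at p) v =
  (\<Sum>i\<in>UNIV. \<Sum>j\<in>UNIV. \<Sum>k\<in>UNIV. \<Sum>l\<in>UNIV.
     gid i k * Pm $ j $ l * hm i j * hm k l + Pm $ i $ k * gid j l * hm i j * hm k l
   + Pm $ i $ k * Pm $ j $ l * hdm i j * hm k l + Pm $ i $ k * Pm $ j $ l * hm i j * hdm k l)"
proof -
  have "frechet_derivative (normA2 F N) (at p) v = (\<Sum>i\<in>UNIV. \<Sum>j\<in>UNIV. \<Sum>k\<in>UNIV. \<Sum>l\<in>UNIV.
     gim p i k * gim p j l * sff_mat F N p $ i $ j * smd k l v
   + (gim p i k * gim p j l * smd i j v + (gim p i k * gdh j l v + gdh i k v * gim p j l) * sff_mat F N p $ i $ j)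
     * sff_mat F N p $ k $ l)"
    by (rule sym[OF fun_cong[OF frechet_derivative_at[OF normA2_D]]])
  also have "\<dots> = (\<Sum>i\<in>UNIV. \<Sum>j\<in>UNIV. \<Sum>k\<in>UNIV. \<Sum>l\<in>UNIV.
     gid i k * Pm $ j $ l * hm i j * hm k l + Pm $ i $ k * gid j l * hm i j * hm k l
   + Pm $ i $ k * Pm $ j $ l * hdm i j * hm k l + Pm $ i $ k * Pm $ j $ l * hm i j * hdm k l)"
    unfolding gid_def[symmetric] gi_p sm_p sm_dv
    by (intro sum.cong refl) (simp add: algebra_simps)
  finally show ?thesis .
qed

lemma mc_D: "(mean_curv F N has_derivative (\<lambda>h. \<Sum>i\<in>UNIV. \<Sum>j\<in>UNIV.
     gim p i j * smd i j h + gdh i j h * sff_mat F N p $ i $ j)) (at p)"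
  unfolding mc_fun
  by (intro has_derivative_sum has_derivative_mult gi_deriv sm_deriv)

lemma mc_dv: "(\<Sum>i\<in>UNIV. \<Sum>j\<in>UNIV. Pm $ i $ j * hdm i j + gid i j * hm i j) = 0"
proof -
  define D where "D = (\<lambda>h. \<Sum>i\<in>UNIV. \<Sum>j\<in>UNIV. gim p i j * smd i j h + gdh i j h * sff_mat F N p $ i $ j)"
  have D: "(mean_curv F N has_derivative D) (at p)" unfolding D_def by (rule mc_D)
  have Dv: "D v = (\<Sum>i\<in>UNIV. \<Sum>j\<in>UNIV. Pm $ i $ j * hdm i j + gid i j * hm i j)"
    unfolding D_def gid_def[symmetric] gi_p sm_p sm_dv ..
  have lin: "linear D" using D has_derivative_linear by blast
  have Z: "D d = 0" if d: "d $ k \<le> 0" for d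
  proof (rule deriv_zero_dir[OF D U p(1), where Q="\<lambda>y. y $ k \<le> 0"])
    show "mean_curv F N y = mean_curv F N p" if "y \<in> U" "y $ k \<le> 0" for y
      using minimal that p by simp
    show "(p + s *\<^sub>R d) $ k \<le> 0" if "s > 0" for s
      using that d p(2) by (simp add: mult_nonneg_nonpos)
  qed
  have "D v = 0"
  proof (cases "v $ k \<le> 0")
    case True then show ?thesis using Z by blast
  next
    case False
    then have "D (- v) = 0" using Z[of "- v"] by simp
    then show ?thesis using linear_neg[OF lin, of v] by simp
  qed
  then show ?thesis using Dv by simp
qed

lemma hm_eq: "hm = (\<lambda>i j. hf (axis i 1) (axis j 1))" by (rule ext, rule ext) (simp add: hm_def)
lemma hdm_eq: "hdm = (\<lambda>i j. hdf (axis i 1) (axis j 1))" by (rule ext, rule ext) (simp add: hdm_def)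

lemma cf_hm: "cf E hm a b = hf (E a) (E b)"
  unfolding hm_eq by (rule cf_bil[OF hf_lin1 hf_lin2])
lemma cf_hdm: "cf E hdm a b = hdf (E a) (E b)"
  unfolding hdm_eq by (rule cf_bil[OF hdf_lin1 hdf_lin2])

lemma delta2: "(\<Sum>a\<in>Sx. \<Sum>b\<in>Sx. (if a = b then 1 else 0) * X a b) = (\<Sum>a\<in>Sx. (X a a :: real))"
  by (rule sum.cong[OF refl]) (rule delta_sum)

lemma Q_PP: "(\<Sum>i\<in>UNIV. \<Sum>j\<in>UNIV. \<Sum>k\<in>UNIV. \<Sum>l\<in>UNIV. Pm $ i $ k * Pm $ j $ l * C i j * D k l)
   = (\<Sum>a\<in>Sx. \<Sum>c\<in>Sx. cf E C a c * cf E D a c)"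
proof -
  have "(\<Sum>i\<in>UNIV. \<Sum>j\<in>UNIV. \<Sum>k\<in>UNIV. \<Sum>l\<in>UNIV. Pm $ i $ k * Pm $ j $ l * C i j * D k l)
    = (\<Sum>a\<in>Sx. \<Sum>b\<in>Sx. (if a = b then 1 else 0) * (\<Sum>c\<in>Sx. \<Sum>d\<in>Sx. (if c = d then 1 else 0) * (cf E C a c * cf E D b d)))"
    by (rule Q_lemma[OF Pm_form Pm_form])
  also have "\<dots> = (\<Sum>a\<in>Sx. \<Sum>c\<in>Sx. cf E C a c * cf E D a c)"
    by (simp only: delta2)
  finally show ?thesis .
qed

lemma Q_GP: "(\<Sum>i\<in>UNIV. \<Sum>j\<in>UNIV. \<Sum>k\<in>UNIV. \<Sum>l\<in>UNIV. gid i k * Pm $ j $ l * C i j * D k l)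
   = (\<Sum>a\<in>Sx. \<Sum>b\<in>Sx. (- Gd (E a) (E b)) * (\<Sum>c\<in>Sx. cf E C a c * cf E D b c))"
proof -
  have "(\<Sum>i\<in>UNIV. \<Sum>j\<in>UNIV. \<Sum>k\<in>UNIV. \<Sum>l\<in>UNIV. gid i k * Pm $ j $ l * C i j * D k l)
    = (\<Sum>a\<in>Sx. \<Sum>b\<in>Sx. (- Gd (E a) (E b)) * (\<Sum>c\<in>Sx. \<Sum>d\<in>Sx. (if c = d then 1 else 0) * (cf E C a c * cf E D b d)))"
    by (rule Q_lemma[OF gid_form Pm_form])
  also have "\<dots> = (\<Sum>a\<in>Sx. \<Sum>b\<in>Sx. (- Gd (E a) (E b)) * (\<Sum>c\<in>Sx. cf E C a c * cf E D b c))"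
    by (simp only: delta2)
  finally show ?thesis .
qed

lemma Q_PG: "(\<Sum>i\<in>UNIV. \<Sum>j\<in>UNIV. \<Sum>k\<in>UNIV. \<Sum>l\<in>UNIV. Pm $ i $ k * gid j l * C i j * D k l)
   = (\<Sum>a\<in>Sx. \<Sum>c\<in>Sx. \<Sum>d\<in>Sx. (- Gd (E c) (E d)) * (cf E C a c * cf E D a d))"
proof -
  have "(\<Sum>i\<in>UNIV. \<Sum>j\<in>UNIV. \<Sum>k\<in>UNIV. \<Sum>l\<in>UNIV. Pm $ i $ k * gid j l * C i j * D k l)
    = (\<Sum>a\<in>Sx. \<Sum>b\<in>Sx. (if a = b then 1 else 0) * (\<Sum>c\<in>Sx. \<Sum>d\<in>Sx. (- Gd (E c) (E d)) * (cf E C a c * cf E D b d)))"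
    by (rule Q_lemma[OF Pm_form gid_form])
  also have "\<dots> = (\<Sum>a\<in>Sx. \<Sum>c\<in>Sx. \<Sum>d\<in>Sx. (- Gd (E c) (E d)) * (cf E C a c * cf E D a d))"
    by (simp only: delta2)
  finally show ?thesis .
qed

lemma contract_P: "(\<Sum>i\<in>UNIV. \<Sum>k\<in>UNIV. Pm $ i $ k * R i k) = (\<Sum>a\<in>Sx. cf E R a a)"
proof -
  have "(\<Sum>i\<in>UNIV. \<Sum>k\<in>UNIV. Pm $ i $ k * R i k)
     = (\<Sum>a\<in>Sx. \<Sum>b\<in>Sx. (if a = b then 1 else 0) * cf E R a b)"
    unfolding Pm_form by (rule contract)
  also have "\<dots> = (\<Sum>a\<in>Sx. cf E R a a)" by (simp only: delta2)
  finally show ?thesis .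
qed

lemma contract_G: "(\<Sum>i\<in>UNIV. \<Sum>k\<in>UNIV. gid i k * R i k) = (\<Sum>a\<in>Sx. \<Sum>b\<in>Sx. (- Gd (E a) (E b)) * cf E R a b)"
  unfolding gid_form by (rule contract)

end

lemma final_alg:
  fixes H Hd GD :: "'a \<Rightarrow> 'a \<Rightarrow> real" and \<Gamma> T :: "'a \<Rightarrow> 'a \<Rightarrow> 'a \<Rightarrow> real"
  assumes fin: "finite B" and z: "z \<notin> B"
    and Hs: "\<And>a b. H a b = H b a"
    and \<Gamma>s: "\<And>a b c. \<Gamma> a b c = \<Gamma> b a c"
    and Ts1: "\<And>a b c. T a b c = T b a c" and Ts2: "\<And>a b c. T a b c = T a c b"
    and GDd: "\<And>a b. GD a b = \<Gamma> z b a + \<Gamma> z a b"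
    and Hdd: "\<And>a b. Hd a b = T z a b - (\<Sum>c\<in>insert z B. H z c * \<Gamma> a b c)"
    and a1: "\<And>i. i \<in> B \<Longrightarrow> H i z = 0"
    and a2: "\<And>i j. i \<in> B \<Longrightarrow> j \<in> B \<Longrightarrow> \<Gamma> j i z = (if i = j then -1 else 0)"
    and a3: "\<And>i j. i \<in> B \<Longrightarrow> j \<in> B \<Longrightarrow> T j i z = - H i j + (\<Sum>c\<in>insert z B. H i c * \<Gamma> j z c)
                + (\<Sum>c\<in>insert z B. H j c * \<Gamma> i z c)"
    and a4: "(\<Sum>a\<in>insert z B. H a a) = 0"
    and a5: "(\<Sum>a\<in>insert z B. \<Sum>b\<in>insert z B. GD a b * H a b) = (\<Sum>a\<in>insert z B. Hd a a)"
  shows "- (\<Sum>a\<in>insert z B. \<Sum>b\<in>insert z B. GD a b * (\<Sum>c\<in>insert z B. H a c * H b c))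
         - (\<Sum>a\<in>insert z B. \<Sum>c\<in>insert z B. \<Sum>d\<in>insert z B. GD c d * (H a c * H a d))
         + 2 * (\<Sum>a\<in>insert z B. \<Sum>c\<in>insert z B. Hd a c * H a c)
       = - 2 * (\<Sum>a\<in>insert z B. \<Sum>c\<in>insert z B. (H a c)^2) - 2 * real (card (insert z B)) * (H z z)^2"
proof -
  define S where "S = insert z B"
  define h where "h = H z z"
  define g where "g = \<Gamma> z z z"
  define n where "n = card B"
  define M where "M i j = (\<Sum>l\<in>B. H i l * H j l)" for i j
  define R where "R = (\<Sum>i\<in>B. \<Sum>j\<in>B. \<Gamma> z i j * M i j)"
  define Q2 where "Q2 = (\<Sum>i\<in>B. \<Sum>j\<in>B. (H i j)^2)"
  define P where "P = (\<Sum>i\<in>B. \<Sum>l\<in>B. \<Gamma> z i l * H i l)"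
  have Ms: "M i j = M j i" for i j unfolding M_def by (simp add: mult.commute)
  have Mt: "(\<Sum>i\<in>B. H i j * H i l) = M j l" for j l unfolding M_def by (rule sum.cong[OF refl]) (metis Hs)
  have Mt2: "(\<Sum>j\<in>B. H i j * H j l) = M i l" for i l unfolding M_def by (rule sum.cong[OF refl]) (metis Hs)
  have HoB: "H z i = 0" if "i \<in> B" for i using a1[OF that] Hs by metis
  have sumS: "(\<Sum>c\<in>S. f c) = f z + (\<Sum>c\<in>B. f c)" for f :: "'a \<Rightarrow> real"
    unfolding S_def using fin z by simp
  have sumB_H: "(\<Sum>c\<in>S. H i c * X c) = (\<Sum>l\<in>B. H i l * X l)" if "i \<in> B" for i X
    unfolding sumS using a1[OF that] by simp
  have sumo_H: "(\<Sum>c\<in>S. H z c * X c) = h * X z" for X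
    unfolding sumS h_def using HoB by simp
  have trB: "(\<Sum>i\<in>B. H i i) = - h"
    using a4 unfolding S_def[symmetric] sumS h_def by linarith
  have A: "(\<Sum>a\<in>S. \<Sum>b\<in>S. GD a b * (\<Sum>c\<in>S. H a c * H b c)) = 2 * R + 2 * g * h^2"
  proof -
    have i1: "(\<Sum>c\<in>S. H a c * H b c) = M a b" if "a \<in> B" "b \<in> B" for a b
      using sumB_H[OF that(1), of "H b"] unfolding M_def .
    have i2: "(\<Sum>c\<in>S. H a c * H z c) = 0" if "a \<in> B" for a
      using sumB_H[OF that, of "H z"] HoB by simp
    have i3: "(\<Sum>c\<in>S. H z c * H b c) = h * H b z" for b
      using sumo_H[of "H b"] .
    have "(\<Sum>a\<in>S. \<Sum>b\<in>S. GD a b * (\<Sum>c\<in>S. H a c * H b c))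
        = (\<Sum>b\<in>S. GD z b * (h * H b z)) + (\<Sum>a\<in>B. \<Sum>b\<in>S. GD a b * (\<Sum>c\<in>S. H a c * H b c))"
      unfolding sumS[of "\<lambda>a. \<Sum>b\<in>S. GD a b * (\<Sum>c\<in>S. H a c * H b c)"] i3 ..
    also have "(\<Sum>b\<in>S. GD z b * (h * H b z)) = GD z z * h^2"
      unfolding sumS h_def using a1 by (simp add: power2_eq_square)
    also have "(\<Sum>a\<in>B. \<Sum>b\<in>S. GD a b * (\<Sum>c\<in>S. H a c * H b c)) = (\<Sum>a\<in>B. \<Sum>b\<in>B. GD a b * M a b)"
    proof (rule sum.cong[OF refl])
      fix a assume a: "a \<in> B"
      show "(\<Sum>b\<in>S. GD a b * (\<Sum>c\<in>S. H a c * H b c)) = (\<Sum>b\<in>B. GD a b * M a b)"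
        unfolding sumS[of "\<lambda>b. GD a b * (\<Sum>c\<in>S. H a c * H b c)"] i2[OF a] using i1[OF a] by simp
    qed
    also have "(\<Sum>a\<in>B. \<Sum>b\<in>B. GD a b * M a b) = (\<Sum>a\<in>B. \<Sum>b\<in>B. \<Gamma> z b a * M a b) + R"
      unfolding R_def GDd by (simp add: algebra_simps sum.distrib)
    also have "(\<Sum>a\<in>B. \<Sum>b\<in>B. \<Gamma> z b a * M a b) = R"
      unfolding R_def by (subst sum.swap) (simp add: Ms)
    also have "GD z z = 2 * g" unfolding GDd g_def by simp
    finally show ?thesis by (simp add: algebra_simps)
  qed
  have B: "(\<Sum>a\<in>S. \<Sum>c\<in>S. \<Sum>d\<in>S. GD c d * (H a c * H a d)) = 2 * R + 2 * g * h^2"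
  proof -
    have "(\<Sum>a\<in>S. \<Sum>c\<in>S. \<Sum>d\<in>S. GD c d * (H a c * H a d)) = (\<Sum>c\<in>S. \<Sum>a\<in>S. \<Sum>d\<in>S. GD c d * (H a c * H a d))"
      by (rule sum.swap)
    also have "\<dots> = (\<Sum>c\<in>S. \<Sum>d\<in>S. \<Sum>a\<in>S. GD c d * (H a c * H a d))"
      by (intro sum.cong refl sum.swap)
    also have "\<dots> = (\<Sum>c\<in>S. \<Sum>d\<in>S. GD c d * (\<Sum>a\<in>S. H c a * H d a))"
      unfolding sum_distrib_left by (intro sum.cong refl) (metis Hs)
    also have "\<dots> = 2 * R + 2 * g * h^2" by (rule A)
    finally show ?thesis .
  qed
  have Hd2: "Hd a c = T z a c - h * \<Gamma> a c z" for a c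
    unfolding Hdd S_def[symmetric] sumo_H ..
  have T3: "T z i j = - H i j + (\<Sum>l\<in>B. H i l * \<Gamma> z j l) + (\<Sum>l\<in>B. H j l * \<Gamma> z i l)" if "i \<in> B" "j \<in> B" for i j
  proof -
    have "T z i j = T j i z" by (metis Ts1 Ts2)
    also have "\<dots> = - H i j + (\<Sum>c\<in>S. H i c * \<Gamma> j z c) + (\<Sum>c\<in>S. H j c * \<Gamma> i z c)"
      using a3[OF that] unfolding S_def .
    also have "\<dots> = - H i j + (\<Sum>l\<in>B. H i l * \<Gamma> z j l) + (\<Sum>l\<in>B. H j l * \<Gamma> z i l)"
      using sumB_H[OF that(1)] sumB_H[OF that(2)] \<Gamma>s[of j z] \<Gamma>s[of i z] by simp
    finally show ?thesis .
  qed
  have C: "(\<Sum>a\<in>S. \<Sum>c\<in>S. Hd a c * H a c) = - Q2 + 2 * R - h^2 + (T z z z - h * g) * h"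
  proof -
    have "(\<Sum>a\<in>S. \<Sum>c\<in>S. Hd a c * H a c) = Hd z z * h + (\<Sum>i\<in>B. \<Sum>j\<in>B. Hd i j * H i j)"
      unfolding sumS h_def using a1 HoB by simp
    also have "(\<Sum>i\<in>B. \<Sum>j\<in>B. Hd i j * H i j) = (\<Sum>i\<in>B. \<Sum>j\<in>B. T z i j * H i j) - h^2"
    proof -
      have "(\<Sum>i\<in>B. \<Sum>j\<in>B. Hd i j * H i j) = (\<Sum>i\<in>B. \<Sum>j\<in>B. T z i j * H i j + h * (if i = j then H i j else 0))"
        by (intro sum.cong refl) (simp add: Hd2 a2 algebra_simps)
      also have "\<dots> = (\<Sum>i\<in>B. (\<Sum>j\<in>B. T z i j * H i j) + h * H i i)"
      proof (rule sum.cong[OF refl])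
        fix i assume i: "i \<in> B"
        have e: "(\<Sum>j\<in>B. h * (if i = j then H i j else 0)) = h * H i i"
          using i fin by (simp add: sum_distrib_left[symmetric])
        show "(\<Sum>j\<in>B. T z i j * H i j + h * (if i = j then H i j else 0)) = (\<Sum>j\<in>B. T z i j * H i j) + h * H i i"
          by (simp only: sum.distrib e)
      qed
      also have "\<dots> = (\<Sum>i\<in>B. \<Sum>j\<in>B. T z i j * H i j) + h * (\<Sum>i\<in>B. H i i)"
        by (simp add: sum.distrib sum_distrib_left)
      finally show ?thesis using trB by (simp add: power2_eq_square)
    qed
    also have "(\<Sum>i\<in>B. \<Sum>j\<in>B. T z i j * H i j) = - Q2 + 2 * R"
    proof -
      have "(\<Sum>i\<in>B. \<Sum>j\<in>B. T z i j * H i j)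
          = (\<Sum>i\<in>B. \<Sum>j\<in>B. (- ((H i j)^2)) + (\<Sum>l\<in>B. H i j * H i l * \<Gamma> z j l) + (\<Sum>l\<in>B. H i j * H j l * \<Gamma> z i l))"
        by (intro sum.cong refl) (simp add: T3 algebra_simps power2_eq_square sum_distrib_left)
      also have "\<dots> = - Q2 + (\<Sum>i\<in>B. \<Sum>j\<in>B. \<Sum>l\<in>B. H i j * H i l * \<Gamma> z j l)
                        + (\<Sum>i\<in>B. \<Sum>j\<in>B. \<Sum>l\<in>B. H i j * H j l * \<Gamma> z i l)"
        unfolding Q2_def by (simp add: sum.distrib sum_negf sum_subtractf)
      also have "(\<Sum>i\<in>B. \<Sum>j\<in>B. \<Sum>l\<in>B. H i j * H i l * \<Gamma> z j l) = R"
      proof -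
        have "(\<Sum>i\<in>B. \<Sum>j\<in>B. \<Sum>l\<in>B. H i j * H i l * \<Gamma> z j l) = (\<Sum>j\<in>B. \<Sum>i\<in>B. \<Sum>l\<in>B. H i j * H i l * \<Gamma> z j l)"
          by (rule sum.swap)
        also have "\<dots> = (\<Sum>j\<in>B. \<Sum>l\<in>B. \<Sum>i\<in>B. H i j * H i l * \<Gamma> z j l)"
          by (intro sum.cong refl sum.swap)
        also have "\<dots> = R" unfolding R_def
          by (simp add: sum_distrib_left[symmetric] sum_distrib_right[symmetric] Mt mult.commute)
        finally show ?thesis .
      qed
      also have "(\<Sum>i\<in>B. \<Sum>j\<in>B. \<Sum>l\<in>B. H i j * H j l * \<Gamma> z i l) = R"
      proof -
        have "(\<Sum>i\<in>B. \<Sum>j\<in>B. \<Sum>l\<in>B. H i j * H j l * \<Gamma> z i l) = (\<Sum>i\<in>B. \<Sum>l\<in>B. \<Sum>j\<in>B. H i j * H j l * \<Gamma> z i l)"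
          by (intro sum.cong refl sum.swap)
        also have "\<dots> = R" unfolding R_def
          by (simp add: sum_distrib_left[symmetric] sum_distrib_right[symmetric] Mt2 mult.commute)
        finally show ?thesis .
      qed
      finally show ?thesis by simp
    qed
    also have "Hd z z = T z z z - h * g" unfolding Hd2 g_def ..
    finally show ?thesis by (simp add: algebra_simps)
  qed
  have D1: "(\<Sum>a\<in>S. \<Sum>b\<in>S. GD a b * H a b) = 2 * P + 2 * g * h"
  proof -
    have "(\<Sum>a\<in>S. \<Sum>b\<in>S. GD a b * H a b) = GD z z * h + (\<Sum>i\<in>B. \<Sum>j\<in>B. GD i j * H i j)"
      unfolding sumS h_def using a1 HoB by simp
    also have "(\<Sum>i\<in>B. \<Sum>j\<in>B. GD i j * H i j) = (\<Sum>i\<in>B. \<Sum>j\<in>B. \<Gamma> z j i * H i j) + P"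
      unfolding GDd P_def by (simp add: algebra_simps sum.distrib)
    also have "(\<Sum>i\<in>B. \<Sum>j\<in>B. \<Gamma> z j i * H i j) = P"
    proof -
      have "(\<Sum>i\<in>B. \<Sum>j\<in>B. \<Gamma> z j i * H i j) = (\<Sum>j\<in>B. \<Sum>i\<in>B. \<Gamma> z j i * H i j)" by (rule sum.swap)
      also have "\<dots> = P" unfolding P_def by (intro sum.cong refl) (metis Hs)
      finally show ?thesis .
    qed
    also have "GD z z = 2 * g" unfolding GDd g_def by simp
    finally show ?thesis by simp
  qed
  have D2: "(\<Sum>a\<in>S. Hd a a) = h + 2 * P + real n * h + T z z z - h * g"
  proof -
    have "(\<Sum>a\<in>S. Hd a a) = Hd z z + (\<Sum>i\<in>B. Hd i i)" unfolding sumS ..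
    also have "(\<Sum>i\<in>B. Hd i i) = (\<Sum>i\<in>B. T z i i + h)"
      by (intro sum.cong refl) (simp add: Hd2 a2)
    also have "\<dots> = (\<Sum>i\<in>B. T z i i) + real n * h" unfolding n_def by (simp add: sum.distrib)
    also have "(\<Sum>i\<in>B. T z i i) = h + 2 * P"
    proof -
      have "(\<Sum>i\<in>B. T z i i) = (\<Sum>i\<in>B. - H i i + 2 * (\<Sum>l\<in>B. \<Gamma> z i l * H i l))"
        by (intro sum.cong refl) (simp add: T3 mult.commute)
      also have "\<dots> = - (\<Sum>i\<in>B. H i i) + 2 * P"
        unfolding P_def by (simp add: sum.distrib sum_negf sum_subtractf sum_distrib_left)
      finally show ?thesis using trB by simp
    qed
    also have "Hd z z = T z z z - h * g" unfolding Hd2 g_def ..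
    finally show ?thesis by simp
  qed
  have Tooo: "T z z z = 3 * g * h - (real n + 1) * h"
    using a5 D1 D2 unfolding S_def[symmetric] by (simp add: algebra_simps)
  have Hsq: "(\<Sum>a\<in>S. \<Sum>c\<in>S. (H a c)^2) = Q2 + h^2"
    unfolding sumS Q2_def h_def using a1 HoB by simp
  have cS: "card S = n + 1" unfolding S_def n_def using fin z by simp
  show ?thesis
    unfolding S_def[symmetric] h_def[symmetric] A B C Hsq cS Tooo
    by (simp add: algebra_simps power2_eq_square)
qed


context FB
begin

lemma Nd_exp: "pd N [u] p = (\<Sum>c\<in>Sx. (- hf u (E c)) *\<^sub>R L (E c))"
proof -
  have "pd N [u] p = (\<Sum>c\<in>Cx. (c \<bullet> pd N [u] p) *\<^sub>R c)" by (rule expand_m)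
  also have "\<dots> = (N p \<bullet> pd N [u] p) *\<^sub>R N p + (\<Sum>c\<in>Sx. (c \<bullet> pd N [u] p) *\<^sub>R c)"
    unfolding Cx_def using Sx_fin Np_notin by simp
  also have "N p \<bullet> pd N [u] p = 0" by (rule N_Nd[OF p(1)])
  also have "(\<Sum>c\<in>Sx. (c \<bullet> pd N [u] p) *\<^sub>R c) = (\<Sum>c\<in>Sx. (- hf u (E c)) *\<^sub>R L (E c))"
  proof (rule sum.cong[OF refl])
    fix c assume c: "c \<in> Sx"
    have "pd N [u] p \<bullet> pd F [E c] p + N p \<bullet> pd F [u, E c] p = 0" by (rule F3[OF p(1)])
    then have "L (E c) \<bullet> pd N [u] p = - hf u (E c)" by (simp add: hf_def inner_commute)
    then show "(c \<bullet> pd N [u] p) *\<^sub>R c = (- hf u (E c)) *\<^sub>R L (E c)" using LE[OF c] by simp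
  qed
  finally show ?thesis by simp
qed

lemma Nd_inner: "X \<bullet> pd N [u] p = - (\<Sum>c\<in>Sx. hf u (E c) * (X \<bullet> L (E c)))"
  by (subst Nd_exp) (simp add: inner_sum_right sum_negf)

lemma a1: "i \<in> Bs \<Longrightarrow> hf (E i) (E (F p)) = 0"
proof -
  assume i: "i \<in> Bs"
  have "pd N [E i] p \<bullet> pd F [v] p + N p \<bullet> pd F [E i, v] p = 0" by (rule F3[OF p(1)])
  moreover have "pd N [E i] p \<bullet> F p = 0" by (rule B3[OF p E_Bs[OF i]])
  ultimately show ?thesis using L_v by (simp add: hf_def E_Fp inner_commute)
qed

lemma a2: "i \<in> Bs \<Longrightarrow> j \<in> Bs \<Longrightarrow> pd F [E j, E i] p \<bullet> L (E (F p)) = (if i = j then -1 else 0)"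
proof -
  assume i: "i \<in> Bs" and j: "j \<in> Bs"
  have "pd F [E j] p \<bullet> pd F [E i] p + F p \<bullet> pd F [E j, E i] p = 0" by (rule B2[OF E_Bs[OF i] E_Bs[OF j]])
  moreover have "pd F [E j] p \<bullet> pd F [E i] p = (if j = i then 1 else 0)"
    using LE[OF Bs_Sx[OF j]] LE[OF Bs_Sx[OF i]] Sx_inner[OF Bs_Sx[OF j] Bs_Sx[OF i]] by simp
  ultimately show ?thesis using L_v by (auto simp: E_Fp inner_commute)
qed

lemma a3: "i \<in> Bs \<Longrightarrow> j \<in> Bs \<Longrightarrow> N p \<bullet> pd F [E j, E i, E (F p)] p =
   - hf (E i) (E j) + (\<Sum>c\<in>Sx. hf (E i) (E c) * (pd F [E j, E (F p)] p \<bullet> L (E c)))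
     + (\<Sum>c\<in>Sx. hf (E j) (E c) * (pd F [E i, E (F p)] p \<bullet> L (E c)))"
proof -
  assume i: "i \<in> Bs" and j: "j \<in> Bs"
  have f4: "pd N [E j, E i] p \<bullet> pd F [v] p + pd N [E i] p \<bullet> pd F [E j, v] p + pd N [E j] p \<bullet> pd F [E i, v] p
         + N p \<bullet> pd F [E j, E i, v] p = 0" by (rule F4[OF p(1)])
  have b4: "pd N [E j, E i] p \<bullet> F p + pd N [E i] p \<bullet> pd F [E j] p = 0" by (rule B4[OF E_Bs[OF i] E_Bs[OF j]])
  have f3: "pd N [E i] p \<bullet> pd F [E j] p + N p \<bullet> pd F [E i, E j] p = 0" by (rule F3[OF p(1)])
  have n1: "pd F [E j, v] p \<bullet> pd N [E i] p = - (\<Sum>c\<in>Sx. hf (E i) (E c) * (pd F [E j, v] p \<bullet> L (E c)))"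
    by (rule Nd_inner)
  have n2: "pd F [E i, v] p \<bullet> pd N [E j] p = - (\<Sum>c\<in>Sx. hf (E j) (E c) * (pd F [E i, v] p \<bullet> L (E c)))"
    by (rule Nd_inner)
  have "pd F [v] p = F p" using L_v by simp
  then show ?thesis using f4 b4 f3 n1 n2 unfolding E_Fp hf_def by (simp add: inner_commute)
qed

lemma Hdd: "hdf (E a) (E b) = N p \<bullet> pd F [E (F p), E a, E b] p
   - (\<Sum>c\<in>Sx. hf (E (F p)) (E c) * (pd F [E a, E b] p \<bullet> L (E c)))"
  unfolding hdf_def E_Fp using Nd_inner[of "pd F [E a, E b] p" v] by (simp add: inner_commute)

lemma GDd: "Gd (E a) (E b) = pd F [E (F p), E b] p \<bullet> L (E a) + pd F [E (F p), E a] p \<bullet> L (E b)"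
  unfolding Gd_def E_Fp by (simp add: inner_commute)

lemma a4: "(\<Sum>a\<in>Sx. hf (E a) (E a)) = 0"
proof -
  have "mean_curv F N p = (\<Sum>i\<in>UNIV. \<Sum>j\<in>UNIV. Pm $ i $ j * hm i j)"
    by (simp add: mc_fun gi_p sm_p)
  also have "\<dots> = (\<Sum>a\<in>Sx. cf E hm a a)" by (rule contract_P)
  also have "\<dots> = (\<Sum>a\<in>Sx. hf (E a) (E a))" by (simp add: cf_hm)
  finally show ?thesis using minimal p by simp
qed

lemma a5: "(\<Sum>a\<in>Sx. \<Sum>b\<in>Sx. Gd (E a) (E b) * hf (E a) (E b)) = (\<Sum>a\<in>Sx. hdf (E a) (E a))"
proof -
  have "0 = (\<Sum>i\<in>UNIV. \<Sum>j\<in>UNIV. Pm $ i $ j * hdm i j) + (\<Sum>i\<in>UNIV. \<Sum>j\<in>UNIV. gid i j * hm i j)"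
    using mc_dv by (simp add: sum.distrib)
  also have "(\<Sum>i\<in>UNIV. \<Sum>j\<in>UNIV. Pm $ i $ j * hdm i j) = (\<Sum>a\<in>Sx. hdf (E a) (E a))"
    by (simp add: contract_P cf_hdm)
  also have "(\<Sum>i\<in>UNIV. \<Sum>j\<in>UNIV. gid i j * hm i j) = (\<Sum>a\<in>Sx. \<Sum>b\<in>Sx. (- Gd (E a) (E b)) * hf (E a) (E b))"
    by (simp add: contract_G cf_hm)
  finally show ?thesis by (simp add: sum_negf)
qed

lemma normA2_p: "normA2 F N p = (\<Sum>a\<in>Sx. \<Sum>c\<in>Sx. (hf (E a) (E c))^2)"
proof -
  have "normA2 F N p = (\<Sum>i\<in>UNIV. \<Sum>j\<in>UNIV. \<Sum>k\<in>UNIV. \<Sum>l\<in>UNIV. Pm $ i $ k * Pm $ j $ l * hm i j * hm k l)"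
    by (simp add: normA2_fun gi_p sm_p)
  also have "\<dots> = (\<Sum>a\<in>Sx. \<Sum>c\<in>Sx. cf E hm a c * cf E hm a c)" by (rule Q_PP)
  finally show ?thesis by (simp add: cf_hm power2_eq_square)
qed

lemma normA2_dv2: "frechet_derivative (normA2 F N) (at p) v =
   - (\<Sum>a\<in>Sx. \<Sum>b\<in>Sx. Gd (E a) (E b) * (\<Sum>c\<in>Sx. hf (E a) (E c) * hf (E b) (E c)))
   - (\<Sum>a\<in>Sx. \<Sum>c\<in>Sx. \<Sum>d\<in>Sx. Gd (E c) (E d) * (hf (E a) (E c) * hf (E a) (E d)))
   + 2 * (\<Sum>a\<in>Sx. \<Sum>c\<in>Sx. hdf (E a) (E c) * hf (E a) (E c))"
proof -
  have "frechet_derivative (normA2 F N) (at p) v =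
     (\<Sum>i\<in>UNIV. \<Sum>j\<in>UNIV. \<Sum>k\<in>UNIV. \<Sum>l\<in>UNIV. gid i k * Pm $ j $ l * hm i j * hm k l)
   + (\<Sum>i\<in>UNIV. \<Sum>j\<in>UNIV. \<Sum>k\<in>UNIV. \<Sum>l\<in>UNIV. Pm $ i $ k * gid j l * hm i j * hm k l)
   + (\<Sum>i\<in>UNIV. \<Sum>j\<in>UNIV. \<Sum>k\<in>UNIV. \<Sum>l\<in>UNIV. Pm $ i $ k * Pm $ j $ l * hdm i j * hm k l)
   + (\<Sum>i\<in>UNIV. \<Sum>j\<in>UNIV. \<Sum>k\<in>UNIV. \<Sum>l\<in>UNIV. Pm $ i $ k * Pm $ j $ l * hm i j * hdm k l)"
    unfolding normA2_dv by (simp only: sum.distrib)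
  also have "\<dots> = (\<Sum>a\<in>Sx. \<Sum>b\<in>Sx. (- Gd (E a) (E b)) * (\<Sum>c\<in>Sx. hf (E a) (E c) * hf (E b) (E c)))
     + (\<Sum>a\<in>Sx. \<Sum>c\<in>Sx. \<Sum>d\<in>Sx. (- Gd (E c) (E d)) * (hf (E a) (E c) * hf (E a) (E d)))
     + (\<Sum>a\<in>Sx. \<Sum>c\<in>Sx. hdf (E a) (E c) * hf (E a) (E c))
     + (\<Sum>a\<in>Sx. \<Sum>c\<in>Sx. hf (E a) (E c) * hdf (E a) (E c))"
    by (simp only: Q_GP Q_PG Q_PP cf_hm cf_hdm)
  finally show ?thesis by (simp add: sum_negf mult.commute[of "hf _ _" "hdf _ _"])
qed

lemma main_result: "frechet_derivative (normA2 F N) (at p) v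
           = - 2 * normA2 F N p - 2 * real CARD('n) * (sff F N p v v)\<^sup>2"
proof -
  have fa: "- (\<Sum>a\<in>insert (F p) Bs. \<Sum>b\<in>insert (F p) Bs. Gd (E a) (E b) * (\<Sum>c\<in>insert (F p) Bs. hf (E a) (E c) * hf (E b) (E c)))
         - (\<Sum>a\<in>insert (F p) Bs. \<Sum>c\<in>insert (F p) Bs. \<Sum>d\<in>insert (F p) Bs. Gd (E c) (E d) * (hf (E a) (E c) * hf (E a) (E d)))
         + 2 * (\<Sum>a\<in>insert (F p) Bs. \<Sum>c\<in>insert (F p) Bs. hdf (E a) (E c) * hf (E a) (E c))
       = - 2 * (\<Sum>a\<in>insert (F p) Bs. \<Sum>c\<in>insert (F p) Bs. (hf (E a) (E c))^2)
         - 2 * real (card (insert (F p) Bs)) * (hf (E (F p)) (E (F p)))^2"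
  proof (rule final_alg[where \<Gamma>="\<lambda>a b c. pd F [E a, E b] p \<bullet> L (E c)" and T="\<lambda>a b c. N p \<bullet> pd F [E a, E b, E c] p"])
    show "finite Bs" by (rule Bs_fin)
    show "F p \<notin> Bs" by (rule Fp_notin)
    show "hf (E a) (E b) = hf (E b) (E a)" for a b unfolding hf_def by (simp only: symF[OF p(1)])
    show "pd F [E a, E b] p \<bullet> L (E c) = pd F [E b, E a] p \<bullet> L (E c)" for a b c
      by (simp only: symF[OF p(1)])
    show "N p \<bullet> pd F [E a, E b, E c] p = N p \<bullet> pd F [E b, E a, E c] p" for a b c
      by (simp only: sym3b[OF p(1)])
    show "N p \<bullet> pd F [E a, E b, E c] p = N p \<bullet> pd F [E a, E c, E b] p" for a b c
      by (simp only: sym3a[OF p(1)])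
    show "Gd (E a) (E b) = pd F [E (F p), E b] p \<bullet> L (E a) + pd F [E (F p), E a] p \<bullet> L (E b)" for a b
      by (rule GDd)
    show "hdf (E a) (E b) = N p \<bullet> pd F [E (F p), E a, E b] p
       - (\<Sum>c\<in>insert (F p) Bs. hf (E (F p)) (E c) * (pd F [E a, E b] p \<bullet> L (E c)))" for a b
      using Hdd unfolding Sx_def .
    show "hf (E i) (E (F p)) = 0" if "i \<in> Bs" for i using a1 that .
    show "pd F [E j, E i] p \<bullet> L (E (F p)) = (if i = j then -1 else 0)" if "i \<in> Bs" "j \<in> Bs" for i j
      using a2 that .
    show "N p \<bullet> pd F [E j, E i, E (F p)] p = - hf (E i) (E j)
        + (\<Sum>c\<in>insert (F p) Bs. hf (E i) (E c) * (pd F [E j, E (F p)] p \<bullet> L (E c)))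
        + (\<Sum>c\<in>insert (F p) Bs. hf (E j) (E c) * (pd F [E i, E (F p)] p \<bullet> L (E c)))" if "i \<in> Bs" "j \<in> Bs" for i j
      using a3[OF that] unfolding Sx_def .
    show "(\<Sum>a\<in>insert (F p) Bs. hf (E a) (E a)) = 0" using a4 unfolding Sx_def .
    show "(\<Sum>a\<in>insert (F p) Bs. \<Sum>b\<in>insert (F p) Bs. Gd (E a) (E b) * hf (E a) (E b))
        = (\<Sum>a\<in>insert (F p) Bs. hdf (E a) (E a))" using a5 unfolding Sx_def .
  qed
  have sv: "sff F N p v v = hf (E (F p)) (E (F p))" by (simp add: sff_def hf_def E_Fp)
  show ?thesis
    unfolding normA2_dv2 normA2_p sv Sx_card[symmetric]
    using fa unfolding Sx_def by simp
qed

end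

theorem proposition3p7:
  fixes F N :: "real^'n \<Rightarrow> real^'m" and U :: "(real^'n) set" and k :: 'n
  assumes dim: "CARD('m) = CARD('n) + 1"
    and U: "open U"
    and F_smooth: "smooth_on U F"
    and immersion: "\<forall>x\<in>U. inj (frechet_derivative F (at x))"
    and N_smooth: "smooth_on U N"
    and N_unit: "\<forall>x\<in>U. norm (N x) = 1"
    and N_normal: "\<forall>x\<in>U. \<forall>i. N x \<bullet> dF F x i = 0"
    and minimal: "\<forall>x\<in>U. x $ k \<le> 0 \<longrightarrow> mean_curv F N x = 0"
    and bdry_sphere: "\<forall>x\<in>U. x $ k = 0 \<longrightarrow> norm (F x) = 1"
    and free_bdry: "\<forall>x\<in>U. x $ k = 0 \<longrightarrow> N x \<bullet> F x = 0"
    and p: "p \<in> U" "p $ k = 0"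
    and v: "frechet_derivative F (at p) v = F p"
  shows "frechet_derivative (normA2 F N) (at p) v
           = - 2 * normA2 F N p - 2 * real CARD('n) * (sff F N p v v)\<^sup>2"
proof -
  interpret FB F N U k p v
    using assms by (unfold_locales) auto
  show ?thesis by (rule main_result)
qed

end
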